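(* Let $\alpha\in(0,1)$ and let $u_\alpha(k)$, $k\ge1$, be either the linear boundary $u_\alpha(k)=\sqrt{\frac{-\log\alpha}{2m}}\,k+\sqrt{\frac{-m\log\alpha}{2}}$ (fixed $m>0$) or the curved boundary $u_\alpha(k)=1.7\sqrt{k(\log\log(2k)+0.72\log\frac{5.2}{\alpha})}$. Suppose the $p$-values $(p_i)_{i\in\mathcal I}$ have nondecreasing densities on $[0,1]$ and are independent of each other and of the covariates $(x_i)_{i\in\mathcal I}$. Then the interactively ordered martingale test in which the masked $p$-value $g$ is replaced by $\widetilde g(p)=\min(p,(p+\tfrac12)\bmod 1)$ controls the type-I error at level $\alpha$, i.e. rejects with probability at most $\alpha$, for any analyst strategy. Here the test is as follows (with $\widetilde g$ in place of $g$). (Batch, $\mathcal I=\{1,\dots,n\}$.) $M_0=\emptyset$, $\mathcal F_0=\sigma((x_i,\widetilde g(p_i))_{i=1}^n)$; for $k=1,\dots,n$ choose $i^\star_k\notin M_{k-1}$ measurably w.r.t. $\mathcal F_{k-1}$, set $M_k=M_{k-1}\cup\{i^\star_k\}$, $\mathcal F_k=\sigma((x_i,\widetilde g(p_i))_{i=1}^n,(p_i)_{i\in M_k})$, and reject if $\sum_{i\in M_k}h(p_i)>u_\alpha(k)$. (Online, $\mathcal I=\mathbb N$.) For $t=1,2,\dots$, with $\mathcal F_{t-1}=\sigma((x_i,\widetilde g(p_i))_{i=1}^t,(p_i)_{i=1}^{t-1})$, decide measurably w.r.t. $\mathcal F_{t-1}$ whether to add $t$ to the current set $M$; reject if $|M|=k\ge1$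 and $\sum_{i\in M}h(p_i)>u_\alpha(k)$.
   Context: $h(p)=2\cdot\mathbf 1\{p<0.5\}-1\in\{-1,1\}$. The assumptions describe the global null hypothesis; the rejection probability under them is the type-I error. *)

theory Defs
  imports "HOL-Probability.Probability"
begin

definition h :: "real \<Rightarrow> real" where
  "h p = 2 * (if p < 1/2 then 1 else 0) - 1"

text \<open>Modified masking function: min(p, (p + 1/2) mod 1); for reals, x mod 1 = frac x.\<close>
definition gtilde :: "real \<Rightarrow> real" where
  "gtilde p = min p (frac (p + 1/2))"

definition u_lin :: "real \<Rightarrow> real \<Rightarrow> nat \<Rightarrow> real" where
  "u_lin m \<alpha> k = sqrt (- ln \<alpha> / (2 * m)) * real k + sqrt (- m * ln \<alpha> / 2)"

definition u_curved :: "real \<Rightarrow> nat \<Rightarrow> real" where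
  "u_curved \<alpha> k = 1.7 * sqrt (real k * (ln (ln (2 * real k)) + 0.72 * ln (5.2 / \<alpha>)))"

definition preimgs :: "'a set \<Rightarrow> ('a \<Rightarrow> 'b) \<Rightarrow> 'b measure \<Rightarrow> 'a set set" where
  "preimgs \<Omega> f N = {f -` A \<inter> \<Omega> | A. A \<in> sets N}"

definition pvalue_hyps ::
  "'a measure \<Rightarrow> 'x measure \<Rightarrow> nat set \<Rightarrow> (nat \<Rightarrow> 'a \<Rightarrow> 'x) \<Rightarrow> (nat \<Rightarrow> 'a \<Rightarrow> real) \<Rightarrow> bool" where
  "pvalue_hyps M X I x p \<longleftrightarrow>
     (\<forall>i\<in>I. x i \<in> measurable M X) \<and>
     (\<forall>i\<in>I. \<exists>f. distributed M lborel (p i) f \<and> (\<forall>t. t \<notin> {0..1} \<longrightarrow> f t = 0)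
                  \<and> mono_on {0..1} f) \<and>
     prob_space.indep_vars M (\<lambda>_. borel) p I \<and>
     prob_space.indep_set M
        (preimgs (space M) (\<lambda>\<omega>. restrict (\<lambda>i. p i \<omega>) I) (PiM I (\<lambda>_. borel)))
        (preimgs (space M) (\<lambda>\<omega>. restrict (\<lambda>i. x i \<omega>) I) (PiM I (\<lambda>_. X)))"

definition revealed :: "(nat \<Rightarrow> 'a \<Rightarrow> nat) \<Rightarrow> nat \<Rightarrow> 'a \<Rightarrow> nat set" where
  "revealed istar k \<omega> = (\<lambda>j. istar j \<omega>) ` {1..k}"

text \<open>F_k = sigma((x_i, gtilde(p_i))_{i=1..n}, (p_i)_{i \<in> M_k}); the randomly indexed
  family (p_i)_{i \<in> M_k} is encoded by the indicators 1{i \<in> M_k} together with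
  p_i * 1{i \<in> M_k}, i = 1..n.\<close>
definition F_batch ::
  "'a measure \<Rightarrow> 'x measure \<Rightarrow> nat \<Rightarrow> (nat \<Rightarrow> 'a \<Rightarrow> 'x) \<Rightarrow> (nat \<Rightarrow> 'a \<Rightarrow> real)
     \<Rightarrow> (nat \<Rightarrow> 'a \<Rightarrow> nat) \<Rightarrow> nat \<Rightarrow> 'a measure" where
  "F_batch M X n x p istar k = sigma (space M)
     (\<Union>i\<in>{1..n}. preimgs (space M) (x i) X
               \<union> preimgs (space M) (\<lambda>\<omega>. gtilde (p i \<omega>)) borel
               \<union> preimgs (space M) (\<lambda>\<omega>. i \<in> revealed istar k \<omega>) (count_space UNIV)
               \<union> preimgs (space M) (\<lambda>\<omega>. if i \<in> revealed istar k \<omega> then p i \<omega> else 0) borel)"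

definition batch_strategy ::
  "'a measure \<Rightarrow> 'x measure \<Rightarrow> nat \<Rightarrow> (nat \<Rightarrow> 'a \<Rightarrow> 'x) \<Rightarrow> (nat \<Rightarrow> 'a \<Rightarrow> real)
     \<Rightarrow> (nat \<Rightarrow> 'a \<Rightarrow> nat) \<Rightarrow> bool" where
  "batch_strategy M X n x p istar \<longleftrightarrow>
     (\<forall>k\<in>{1..n}. istar k \<in> measurable (F_batch M X n x p istar (k - 1)) (count_space UNIV)
        \<and> (\<forall>\<omega>\<in>space M. istar k \<omega> \<in> {1..n} - revealed istar (k - 1) \<omega>))"

definition batch_reject ::
  "(nat \<Rightarrow> real) \<Rightarrow> nat \<Rightarrow> (nat \<Rightarrow> 'a \<Rightarrow> real) \<Rightarrow> (nat \<Rightarrow> 'a \<Rightarrow> nat) \<Rightarrow> 'a \<Rightarrow> bool" where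
  "batch_reject u n p istar \<omega> \<longleftrightarrow>
     (\<exists>k\<in>{1..n}. (\<Sum>i\<in>revealed istar k \<omega>. h (p i \<omega>)) > u k)"

text \<open>F_{t-1} = sigma((x_i, gtilde(p_i))_{i=1..t}, (p_i)_{i=1..t-1})\<close>
definition F_online ::
  "'a measure \<Rightarrow> 'x measure \<Rightarrow> (nat \<Rightarrow> 'a \<Rightarrow> 'x) \<Rightarrow> (nat \<Rightarrow> 'a \<Rightarrow> real) \<Rightarrow> nat \<Rightarrow> 'a measure" where
  "F_online M X x p t = sigma (space M)
     ((\<Union>i\<in>{1..t}. preimgs (space M) (x i) X \<union> preimgs (space M) (\<lambda>\<omega>. gtilde (p i \<omega>)) borel)
      \<union> (\<Union>i\<in>{1..<t}. preimgs (space M) (p i) borel))"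

text \<open>d t \<omega> = True iff t is added to M at time t; decision is F_{t-1}-measurable.\<close>
definition online_strategy ::
  "'a measure \<Rightarrow> 'x measure \<Rightarrow> (nat \<Rightarrow> 'a \<Rightarrow> 'x) \<Rightarrow> (nat \<Rightarrow> 'a \<Rightarrow> real) \<Rightarrow> (nat \<Rightarrow> 'a \<Rightarrow> bool) \<Rightarrow> bool" where
  "online_strategy M X x p d \<longleftrightarrow>
     (\<forall>t\<ge>1. d t \<in> measurable (F_online M X x p t) (count_space UNIV))"

definition selected :: "(nat \<Rightarrow> 'a \<Rightarrow> bool) \<Rightarrow> nat \<Rightarrow> 'a \<Rightarrow> nat set" where
  "selected d t \<omega> = {i \<in> {1..t}. d i \<omega>}"

definition online_reject ::
  "(nat \<Rightarrow> real) \<Rightarrow> (nat \<Rightarrow> 'a \<Rightarrow> real) \<Rightarrow> (nat \<Rightarrow> 'a \<Rightarrow> bool) \<Rightarrow> 'a \<Rightarrow> bool" where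
  "online_reject u p d \<omega> \<longleftrightarrow>
     (\<exists>t\<ge>1. card (selected d t \<omega>) \<ge> 1 \<and>
        (\<Sum>i\<in>selected d t \<omega>. h (p i \<omega>)) > u (card (selected d t \<omega>)))"

end

theory Submission
  imports Defs
begin

lemma exp_lower_sum:
  fixes x :: real assumes "0 \<le> x"
  shows "(\<Sum>n<N. x^n / fact n) \<le> exp x"
proof -
  have s: "(\<lambda>n. x^n /\<^sub>R fact n) sums exp x" by (rule exp_converges)
  have "(\<Sum>n<N. x^n /\<^sub>R fact n) \<le> (\<Sum>n. x^n /\<^sub>R fact n)"
    by (rule sum_le_suminf) (use s assms in \<open>auto simp: sums_iff\<close>)
  then show ?thesis using s by (simp add: sums_iff divide_inverse mult.commute)
qed

lemma exp_upper_pow: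
  fixes y :: real assumes "0 \<le> y" "y \<le> real n" "n > 0"
  shows "exp y \<le> (1 + y / n + (y/n)^2) ^ n"
proof -
  have "exp y = exp (y / n) ^ n" using assms by (simp add: exp_of_nat_mult[symmetric])
  also have "\<dots> \<le> (1 + y / n + (y/n)^2) ^ n"
    by (rule power_mono) (use assms in \<open>auto intro!: exp_bound\<close>)
  finally show ?thesis .
qed

lemma ln3_le: "ln (3::real) \<le> 11/10"
proof -
  have "(3::real) \<le> (\<Sum>n<7. (11/10)^n / fact n)" by (simp add: numeral_eq_Suc fact_numeral)
  also have "\<dots> \<le> exp (11/10)" by (rule exp_lower_sum) simp
  finally show ?thesis by (metis exp_gt_zero ln_exp ln_le_cancel_iff zero_less_numeral)
qed

lemma ln15_le: "ln (3/2::real) \<le> 41/100"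
proof -
  have "(3/2::real) \<le> (\<Sum>n<5. (41/100)^n / fact n)" by (simp add: numeral_eq_Suc fact_numeral)
  also have "\<dots> \<le> exp (41/100)" by (rule exp_lower_sum) simp
  finally show ?thesis by (metis exp_gt_zero ln_exp ln_le_cancel_iff divide_pos_pos zero_less_numeral)
qed

lemma ln52_ge: "16/10 \<le> ln (52/10::real)"
proof -
  have "exp (16/10::real) \<le> (1 + (16/10) / real 32 + ((16/10)/ real 32)^2) ^ 32"
    by (rule exp_upper_pow) auto
  also have "\<dots> \<le> 52/10" by (simp add: power_divide)
  finally show ?thesis by (subst ln_ge_iff) auto
qed

lemma ln35_ge: "12/10 \<le> ln (7/2::real)"
proof -
  have "exp (12/10::real) \<le> (1 + (12/10) / real 16 + ((12/10)/ real 16)^2) ^ 16"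
    by (rule exp_upper_pow) auto
  also have "\<dots> \<le> 7/2" by (simp add: power_divide)
  finally show ?thesis by (subst ln_ge_iff) auto
qed

lemma ln3_ge: "1 \<le> ln (3::real)"
  using exp_le by (subst ln_ge_iff) auto

lemma ln12_ge: "7/3 \<le> ln (12::real)"
proof -
  have "ln (2*2*3::real) = ln 2 + ln 2 + ln 3" by (simp only: ln_mult) simp
  then have "ln (12::real) = ln 2 + ln 2 + ln 3" by simp
  then show ?thesis using ln2_ge_two_thirds ln3_ge by linarith
qed

definition wj :: "nat \<Rightarrow> real" where
  "wj j = (real j + 5/2) powr (-1/3) - (real j + 7/2) powr (-1/3)"

definition cj :: "real \<Rightarrow> nat \<Rightarrow> real" where
  "cj \<alpha> j = - ln (\<alpha> * wj j) / 2"

definition Kj :: "nat \<Rightarrow> real" where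
  "Kj j = 6 * 2 ^ j"

definition aj :: "real \<Rightarrow> nat \<Rightarrow> real" where
  "aj \<alpha> j = sqrt (cj \<alpha> j / (7/5 * Kj j))"

definition bj :: "real \<Rightarrow> nat \<Rightarrow> real" where
  "bj \<alpha> j = sqrt (cj \<alpha> j * (7/5 * Kj j))"

lemma cube_diff_aux:
  fixes y z :: real
  assumes "0 < z" "z < y" "y^3 - z^3 = 1"
  shows "1 / (3 * y^4) \<le> 1/z - 1/y"
proof -
  have "y^3 - z^3 = (y - z) * (y^2 + y*z + z^2)" by (simp add: power2_eq_square power3_eq_cube algebra_simps)
  moreover have "y^2 + y*z + z^2 \<le> 3 * y^2"
    using assms by (smt (verit, best) mult_less_cancel_left mult_right_mono power2_eq_square power_strict_mono zero_less_numeral)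
  moreover have "0 \<le> y - z" using assms by simp
  ultimately have 1: "1 \<le> (y - z) * (3 * y^2)" using assms(3)
    by (metis mult_left_mono order.trans)
  have "1/z - 1/y = (y - z) / (y * z)" using assms by (simp add: field_simps)
  also have "\<dots> \<ge> (y - z) / (y * y)"
    using assms by (intro divide_left_mono mult_left_mono) auto
  finally have 2: "(y - z) / (y * y) \<le> 1/z - 1/y" .
  have "1 / (3 * y^4) \<le> (y - z) / (y * y)"
    using 1 assms by (simp add: field_simps power2_eq_square power4_eq_xxxx)
  then show ?thesis using 2 by linarith
qed

lemma wj_lower: "1 / (3 * ((real j + 7/2) powr (1/3))^4) \<le> wj j"
proof -
  define y where "y = (real j + 7/2) powr (1/3)"
  define z where "z = (real j + 5/2) powr (1/3)"
  have y3: "y^3 = real j + 7/2" unfolding y_def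
    by (simp add: powr_realpow[symmetric] powr_powr)
  have z3: "z^3 = real j + 5/2" unfolding z_def
    by (simp add: powr_realpow[symmetric] powr_powr)
  have zp: "0 < z" unfolding z_def by simp
  have "z < y" unfolding y_def z_def by (intro powr_less_mono2) auto
  have "wj j = 1/z - 1/y" unfolding wj_def y_def z_def
    by (simp add: powr_minus_divide)
  then show ?thesis using cube_diff_aux[OF zp \<open>z<y\<close>] y3 z3 unfolding y_def by simp
qed

lemma wj_pos: "0 < wj j"
proof -
  have "0 < 1 / (3 * ((real j + 7/2) powr (1/3))^4)" by simp
  then show ?thesis using wj_lower[of j] by linarith
qed

lemma wj_sum: "(\<Sum>j<n. wj j) \<le> 1"
proof -
  have "(\<Sum>j<n. wj j) = (\<Sum>j<n. (\<lambda>j. (real j + 5/2) powr (-1/3)) j - (\<lambda>j. (real j + 5/2) powr (-1/3)) (Suc j))"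
    unfolding wj_def by (intro sum.cong) (auto simp: algebra_simps)
  also have "\<dots> = (5/2) powr (-1/3) - (real n + 5/2) powr (-1/3)"
    by (subst sum_lessThan_telescope') simp
  also have "\<dots> \<le> (5/2) powr (-1/3)" by simp
  also have "\<dots> \<le> (5/2) powr 0" by (rule powr_mono) auto
  finally show ?thesis by simp
qed

lemma wj_lt1: "wj j < 1"
proof -
  have "wj j \<le> (real j + 5/2) powr (-1/3)" unfolding wj_def by simp
  also have "\<dots> \<le> (real j + 5/2) powr 0" by (rule powr_mono) auto
  finally have "wj j \<le> 1" by simp
  moreover have "wj j \<noteq> 1"
  proof
    assume "wj j = 1"
    then have "(real j + 5/2) powr (-1/3) \<ge> 1 + (real j + 7/2) powr (-1/3)" unfolding wj_def by simp
    moreover have "(real j + 5/2) powr (-1/3) \<le> 1" using powr_mono[of "-1/3" 0 "real j + 5/2"] by simp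
    moreover have "0 < (real j + 7/2) powr (-1/3)" by simp
    ultimately show False by linarith
  qed
  ultimately show ?thesis by linarith
qed

lemma neg_ln_wj: "- ln (wj j) \<le> ln 3 + 4/3 * ln (real j + 7/2)"
proof -
  define y where "y = (real j + 7/2) powr (1/3)"
  have yp: "0 < y" unfolding y_def by simp
  have "ln (1 / (3 * y^4)) \<le> ln (wj j)"
    using wj_lower[of j] wj_pos[of j] yp unfolding y_def[symmetric] by (subst ln_le_cancel_iff) auto
  moreover have "ln (1 / (3 * y^4)) = - ln 3 - 4 * ln y"
    using yp by (simp add: ln_div ln_mult ln_realpow)
  moreover have "ln y = 1/3 * ln (real j + 7/2)"
    unfolding y_def by (simp add: ln_powr)
  ultimately show ?thesis by linarith
qed

lemma cj_pos: "0 < \<alpha> \<Longrightarrow> \<alpha> < 1 \<Longrightarrow> 0 < cj \<alpha> j"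
proof -
  assume a: "0 < \<alpha>" "\<alpha> < 1"
  have "\<alpha> * wj j < 1 * 1" using a wj_pos[of j] wj_lt1[of j] by (intro mult_strict_mono) auto
  moreover have "0 < \<alpha> * wj j" using a wj_pos[of j] by simp
  ultimately have "ln (\<alpha> * wj j) < 0" by simp
  then show ?thesis unfolding cj_def by simp
qed

lemma ajbj: "0 < \<alpha> \<Longrightarrow> \<alpha> < 1 \<Longrightarrow> exp (- 2 * (aj \<alpha> j * bj \<alpha> j)) = \<alpha> * wj j"
proof -
  assume a: "0 < \<alpha>" "\<alpha> < 1"
  have c: "0 < cj \<alpha> j" by (rule cj_pos[OF a])
  have K: "0 < Kj j" unfolding Kj_def by simp
  have e: "cj \<alpha> j / (7/5 * Kj j) * (cj \<alpha> j * (7/5 * Kj j)) = (cj \<alpha> j)^2"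
    using K by (simp add: field_simps power2_eq_square)
  have "aj \<alpha> j * bj \<alpha> j = sqrt (cj \<alpha> j / (7/5 * Kj j) * (cj \<alpha> j * (7/5 * Kj j)))"
    unfolding aj_def bj_def by (simp only: real_sqrt_mult)
  also have "\<dots> = cj \<alpha> j" using c e by simp
  finally show ?thesis unfolding cj_def using a wj_pos[of j] by simp
qed

lemma aj_pos: "0 < \<alpha> \<Longrightarrow> \<alpha> < 1 \<Longrightarrow> 0 < aj \<alpha> j"
  unfolding aj_def Kj_def using cj_pos by simp

lemma ajbj_eq: "0 < \<alpha> \<Longrightarrow> \<alpha> < 1 \<Longrightarrow> aj \<alpha> j * bj \<alpha> j = cj \<alpha> j"
proof -
  assume a: "0 < \<alpha>" "\<alpha> < 1"
  have c: "0 < cj \<alpha> j" by (rule cj_pos[OF a])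
  have K: "0 < Kj j" unfolding Kj_def by simp
  have e: "cj \<alpha> j / (7/5 * Kj j) * (cj \<alpha> j * (7/5 * Kj j)) = (cj \<alpha> j)^2"
    using K by (simp add: field_simps power2_eq_square)
  have "aj \<alpha> j * bj \<alpha> j = sqrt (cj \<alpha> j / (7/5 * Kj j) * (cj \<alpha> j * (7/5 * Kj j)))"
    unfolding aj_def bj_def by (simp only: real_sqrt_mult)
  also have "\<dots> = cj \<alpha> j" using c e by simp
  finally show ?thesis .
qed

lemma budget:
  assumes a: "0 < \<alpha>" "\<alpha> < 1" and k: "12 * 2^j \<le> k"
  shows "413/100 * cj \<alpha> j \<le> 289/100 * (ln (ln k) + 72/100 * ln (52/10 / \<alpha>))"
proof -
  define L where "L = ln (real j + 7/2)"
  have l12: "ln (12 * 2^j :: real) = ln 12 + real j * ln 2" by (simp add: ln_mult ln_realpow)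
  have "(2/3) * (real j + 7/2) \<le> ln 12 + real j * ln 2"
  proof -
    have "real j * (2/3) \<le> real j * ln 2" using ln2_ge_two_thirds by (intro mult_left_mono) auto
    then show ?thesis using ln12_ge by (simp add: algebra_simps)
  qed
  also have "\<dots> \<le> ln k"
  proof -
    have "0 < (12::real) * 2^j" by simp
    then have "0 < k" using k by linarith
    then show ?thesis using k unfolding l12[symmetric] by (subst ln_le_cancel_iff) auto
  qed
  finally have lk: "(2/3) * (real j + 7/2) \<le> ln k" .
  have "ln ((2/3) * (real j + 7/2)) \<le> ln (ln k)"
    using lk by (subst ln_le_cancel_iff) auto
  moreover have "ln ((2/3) * (real j + 7/2)) = ln (2/3) + L"
    unfolding L_def by (subst ln_mult) auto
  moreover have "ln (2/3::real) = - ln (3/2)" using ln_div[of 2 3] ln_div[of 3 2] by simp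
  ultimately have lnl: "- ln (3/2) + L \<le> ln (ln k)" by simp
  have L35: "ln (7/2) \<le> L" unfolding L_def by (subst ln_le_cancel_iff) auto
  have c_eq: "cj \<alpha> j = (- ln \<alpha> - ln (wj j)) / 2"
    unfolding cj_def using a wj_pos[of j] by (simp add: ln_mult)
  have l52: "ln (52/10 / \<alpha>) = ln (52/10) - ln \<alpha>" using ln_div[of "52/10" \<alpha>] a by simp
  have la: "ln \<alpha> < 0" using a by simp
  have w: "- ln (wj j) \<le> ln 3 + 4/3 * L" using neg_ln_wj[of j] unfolding L_def .
  have e1: "413/100 * ((- ln \<alpha> - ln (wj j)) / 2) = 2065/1000 * (- ln \<alpha>) + 2065/1000 * (- ln (wj j))"
    by (simp add: field_simps)
  have e2: "289/100 * (ln (ln k) + 72/100 * (ln (52/10) - ln \<alpha>)) = 289/100 * ln (ln k) + 20808/10000 * ln (52/10) - 20808/10000 * ln \<alpha>"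
    by (simp add: algebra_simps)
  have e3: "2065/1000 * (- ln (wj j)) \<le> 2065/1000 * (ln 3 + 4/3 * L)" using w by simp
  show ?thesis unfolding c_eq l52 e1 e2
    using lnl L35 la e3 ln3_le ln15_le ln52_ge ln35_ge unfolding ring_distribs by linarith
qed

lemma line_le_u:
  assumes a: "0 < \<alpha>" "\<alpha> < 1" and c1: "Kj j \<le> real c" and c2: "real c \<le> 2 * Kj j"
  shows "aj \<alpha> j * real c + bj \<alpha> j \<le> u_curved \<alpha> c"
proof -
  define k where "k = real c"
  define K where "K = Kj j"
  define cc where "cc = cj \<alpha> j"
  have K0: "0 < K" unfolding K_def Kj_def by simp
  have cc0: "0 < cc" unfolding cc_def using cj_pos[OF a] .
  have k0: "0 < k" using c1 K0 unfolding k_def K_def by simp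
  have a2: "(aj \<alpha> j)^2 = cc / (7/5 * K)" unfolding aj_def cc_def K_def
    using cc0 K0 unfolding cc_def K_def by (simp add: real_sqrt_pow2)
  have b2: "(bj \<alpha> j)^2 = cc * (7/5 * K)" unfolding bj_def cc_def K_def
    using cc0 K0 unfolding cc_def K_def by (simp add: real_sqrt_pow2)
  have ab: "aj \<alpha> j * bj \<alpha> j = cc" unfolding cc_def by (rule ajbj_eq[OF a])
  have sq: "(aj \<alpha> j * k + bj \<alpha> j)^2 = (aj \<alpha> j)^2 * k^2 + 2 * (aj \<alpha> j * bj \<alpha> j) * k + (bj \<alpha> j)^2"
    by (simp add: power2_eq_square algebra_simps)
  have poly: "k^2 + (2 - 413/100) * (7/5) * K * k + (7/5)^2 * K^2 \<le> 0"
  proof -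
    have "(k - K) * (k - 2*K) \<le> 0"
      using c1 c2 unfolding k_def K_def by (intro mult_nonneg_nonpos) auto
    moreover have "K * k \<le> K * (2 * K)" using c2 K0 unfolding k_def K_def by simp
    moreover have "(k - K) * (k - 2*K) = k*k - 3*(K*k) + 2*(K*K)" by (simp add: algebra_simps)
    moreover have "k^2 + (2 - 413/100) * (7/5) * K * k + (7/5)^2 * K^2 = k*k - (2982/1000)*(K*k) + (196/100)*(K*K)"
      by (simp add: power2_eq_square algebra_simps)
    moreover have "K * (2 * K) = 2*(K*K)" by simp
    moreover have "0 \<le> K*K" by simp
    ultimately have "k*k - (2982/1000)*(K*k) + (196/100)*(K*K) \<le> 0" by linarith
    moreover have "k^2 + (2 - 413/100) * (7/5) * K * k + (7/5)^2 * K^2 = k*k - (2982/1000)*(K*k) + (196/100)*(K*K)"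
      by (simp add: power2_eq_square algebra_simps)
    ultimately show ?thesis by simp
  qed
  have "(aj \<alpha> j * k + bj \<alpha> j)^2 - 413/100 * cc * k
        = cc / (7/5 * K) * (k^2 + (2 - 413/100) * (7/5) * K * k + (7/5)^2 * K^2)"
    unfolding sq a2 b2 ab using K0 by (simp add: field_simps power2_eq_square)
  also have "\<dots> \<le> 0" by (rule mult_nonneg_nonpos) (use poly cc0 K0 in auto)
  finally have s1: "(aj \<alpha> j * k + bj \<alpha> j)^2 \<le> 413/100 * cc * k" by simp
  have "12 * 2^j \<le> 2 * k" using c1 unfolding k_def Kj_def by simp
  from budget[OF a this] have bud: "413/100 * cc \<le> 289/100 * (ln (ln (2*k)) + 72/100 * ln (52/10 / \<alpha>))"
    unfolding cc_def .
  define Q where "Q = ln (ln (2*k)) + 72/100 * ln (52/10 / \<alpha>)"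
  have Q0: "0 \<le> Q" using bud cc0 unfolding Q_def ring_distribs by linarith
  have "413/100 * cc * k \<le> 289/100 * Q * k" using bud k0 unfolding Q_def by (intro mult_right_mono) auto
  also have "\<dots> = (17/10 * sqrt (k * Q))^2"
  proof -
    have kq: "0 \<le> k * Q" using Q0 k0 by simp
    have "(17/10 * sqrt (k * Q))^2 = 289/100 * (k * Q)" unfolding power_mult_distrib real_sqrt_pow2[OF kq] by (simp add: power2_eq_square)
    then show ?thesis by simp
  qed
  finally have s2: "(aj \<alpha> j * k + bj \<alpha> j)^2 \<le> (17/10 * sqrt (k * Q))^2" using s1 by linarith
  have "aj \<alpha> j * k + bj \<alpha> j \<le> 17/10 * sqrt (k * Q)"
    by (rule power2_le_imp_le[OF s2]) (use Q0 k0 in simp)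
  then show ?thesis unfolding u_curved_def k_def Q_def by simp
qed

lemma small_c:
  assumes a: "0 < \<alpha>" "\<alpha> < 1" and c: "1 \<le> c" "c \<le> 5"
  shows "real c \<le> u_curved \<alpha> c"
proof -
  have la: "ln \<alpha> < 0" using a by simp
  have l52: "ln (52/10 / \<alpha>) = ln (52/10) - ln \<alpha>" using ln_div[of "52/10" \<alpha>] a by simp
  have "16/10 \<le> ln (52/10) - ln \<alpha>" using la ln52_ge by linarith
  then have A: "72/100 * ln (52/10 / \<alpha>) \<ge> 72/100 * (16/10)" unfolding l52 by (intro mult_left_mono) auto
    have l2: "ln (ln (2::real)) \<ge> - 41/100"
    proof -
      have "ln (2/3) \<le> ln (ln (2::real))" using ln2_ge_two_thirds by (subst ln_le_cancel_iff) auto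
      moreover have "ln (2/3::real) = - ln (3/2)" using ln_div[of 2 3] ln_div[of 3 2] by simp
      ultimately show ?thesis using ln15_le by linarith
    qed
    have l4: "c \<ge> 2 \<Longrightarrow> ln (ln (2 * real c)) \<ge> 0"
    proof -
      assume "c \<ge> 2"
      then have "ln 4 \<le> ln (2 * real c)" by (subst ln_le_cancel_iff) auto
      moreover have "ln (4::real) = 2 * ln 2" using ln_realpow[of 2 2] by simp
      ultimately have "1 \<le> ln (2 * real c)" using ln2_ge_two_thirds by linarith
      then show ?thesis by simp
    qed
    have l8: "c \<ge> 4 \<Longrightarrow> ln (ln (2 * real c)) \<ge> 2/3"
    proof -
      assume "c \<ge> 4"
      then have "ln 8 \<le> ln (2 * real c)" by (subst ln_le_cancel_iff) auto
      moreover have "ln (8::real) = 3 * ln 2" using ln_realpow[of 2 3] by simp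
      ultimately have "2 \<le> ln (2 * real c)" using ln2_ge_two_thirds by linarith
      then have "ln 2 \<le> ln (ln (2 * real c))" by (subst ln_le_cancel_iff) auto
      then show ?thesis using ln2_ge_two_thirds by linarith
    qed
  have "real c \<le> 289/100 * (ln (ln (2 * real c)) + 72/100 * ln (52/10 / \<alpha>))"
  proof (cases "c \<ge> 4")
    case True
    then have "ln (ln (2 * real c)) \<ge> 2/3" "real c \<le> 5" using l8 c by auto
    then show ?thesis using A unfolding ring_distribs by linarith
  next
    case F4: False
    show ?thesis
    proof (cases "c \<ge> 2")
      case True
      then have "ln (ln (2 * real c)) \<ge> 0" "real c \<le> 3" using l4 c F4 by auto
      then show ?thesis using A unfolding ring_distribs by linarith
    next
      case False
      then have "c = 1" using c by simp
      then show ?thesis using A l2 unfolding ring_distribs by simp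
    qed
  qed
  define Q where "Q = ln (ln (2 * real c)) + 72/100 * ln (52/10 / \<alpha>)"
  have cQ: "real c \<le> 289/100 * Q" unfolding Q_def by fact
  have Q0: "0 \<le> Q" using cQ by simp
  have "real c * real c \<le> (289/100 * Q) * real c" by (rule mult_right_mono) (use cQ in auto)
  then have "(real c)^2 \<le> 289/100 * Q * real c" by (simp add: power2_eq_square)
  also have "\<dots> = (17/10 * sqrt (real c * Q))^2"
  proof -
    have kq: "0 \<le> real c * Q" using Q0 by simp
    have "(17/10 * sqrt (real c * Q))^2 = 289/100 * (real c * Q)" unfolding power_mult_distrib real_sqrt_pow2[OF kq] by (simp add: power2_eq_square)
    then show ?thesis by simp
  qed
  finally have "real c \<le> 17/10 * sqrt (real c * Q)" by (rule power2_le_imp_le) (use Q0 in simp)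
  then show ?thesis unfolding u_curved_def Q_def by simp
qed

lemma epoch_exists:
  fixes c :: nat assumes "6 \<le> c"
  shows "\<exists>j. Kj j \<le> real c \<and> real c \<le> 2 * Kj j \<and> j < c"
proof -
  have "1 \<le> c div 6" using assms by simp
  from ex_power_ivl1[of 2 "c div 6", OF _ this] obtain j where
    j: "2^j \<le> c div 6" "c div 6 < 2^(j+1)" by auto
  have "6 * 2^j \<le> c" using j(1) by linarith
  moreover have "c < 6 * 2^(j+1)" using j(2) by linarith
  moreover have "j < 2^j" by (rule less_exp)
  moreover have "(2::nat)^(j+1) = 2 * 2^j" by simp
  ultimately have "6 * 2^j \<le> c \<and> c \<le> 2 * (6 * 2^j) \<and> j < c" by linarith
  moreover have "(6::real) * 2^j = real (6*2^j)" by simp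
  moreover have "(2::real) * (6 * 2^j) = real (2 * (6*2^j))" by simp
  ultimately show ?thesis unfolding Kj_def
    by (intro exI[of _ j]) (simp only: of_nat_le_iff)
qed

lemma cosh_bound:
  fixes l :: real assumes "0 \<le> l"
  shows "(exp l + exp (-l)) / 2 \<le> exp (l^2 / 2)"
proof -
  have h: "- (2*l) * (1/2) + ln (1 + (1/2) * (exp (2*l) - 1)) \<le> (2*l)^2 / 8"
    by (rule Hoeffdings_lemma_aux) (use assms in auto)
  have ee: "exp (2*l) = exp l * exp l" using exp_add[of l l] by (simp only: mult_2)
  have e: "1 + (1/2) * (exp (2*l) - 1) = exp l * ((exp l + exp (-l)) / 2)"
    unfolding ee by (simp add: field_simps exp_minus)
  have pos: "0 < (exp l + exp (-l)) / 2" by (simp add: add_pos_pos)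
  have "ln (1 + (1/2) * (exp (2*l) - 1)) = l + ln ((exp l + exp (-l)) / 2)"
    unfolding e by (subst ln_mult) (use pos in auto)
  then have "ln ((exp l + exp (-l)) / 2) \<le> l^2 / 2" using h by (simp add: power2_eq_square)
  then show ?thesis using pos by (metis exp_le_cancel_iff exp_ln)
qed

lemma ennreal_ab:
  fixes a1 a2 :: ennreal and A B :: real
  assumes "a1 \<le> a2" "0 \<le> B" "B \<le> A" "A + B \<le> 2"
  shows "ennreal A * a1 + ennreal B * a2 \<le> a1 + a2"
proof (cases "a2 = top")
  case True then show ?thesis by simp
next
  case False
  then obtain r2 where r2: "a2 = ennreal r2" "0 \<le> r2" by (cases a2) auto
  moreover obtain r1 where r1: "a1 = ennreal r1" "0 \<le> r1"
    using assms(1) False r2 by (cases a1) (auto simp: top_unique)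
  moreover have "r1 \<le> r2" using assms(1) r1 r2 by simp
  moreover have "A * r1 + B * r2 \<le> r1 + r2"
  proof -
    have "0 \<le> (A - B) * (r2 - r1) / 2" using assms \<open>r1 \<le> r2\<close> by simp
    then have "A * r1 + B * r2 \<le> A * r1 + B * r2 + (A - B) * (r2 - r1) / 2" by linarith
    also have "\<dots> = (A + B) / 2 * (r1 + r2)"
      by (simp add: field_simps)
    also have "\<dots> \<le> 1 * (r1 + r2)"
      using assms r1 r2 by (intro mult_right_mono) auto
    finally show ?thesis by simp
  qed
  moreover have "0 \<le> A" using assms by linarith
  ultimately have e1: "ennreal A * a1 = ennreal (A*r1)" and e2: "ennreal B * a2 = ennreal (B*r2)"
    and e3: "a1 + a2 = ennreal (r1 + r2)" and le: "A*r1 + B*r2 \<le> r1 + r2"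
    using assms by (simp_all add: ennreal_mult ennreal_plus)
  have "ennreal (A*r1) + ennreal (B*r2) = ennreal (A*r1 + B*r2)"
    using r1 r2 assms \<open>0 \<le> A\<close> by (intro ennreal_plus[symmetric]) auto
  then show ?thesis unfolding e1 e2 e3 using le by (simp add: ennreal_leI)
qed

locale ville = prob_space M for M :: "'a measure" +
  fixes F :: "nat \<Rightarrow> 'a measure" and \<xi> :: "nat \<Rightarrow> 'a \<Rightarrow> real"
  assumes subalg: "\<And>k. subalgebra M (F k)"
  and meas: "\<And>j k. 1 \<le> j \<Longrightarrow> j \<le> k \<Longrightarrow> \<xi> j \<in> borel_measurable (F k)"
  and vals: "\<And>j \<omega>. \<omega> \<in> space M \<Longrightarrow> \<xi> j \<omega> \<in> {-1, 0, 1}"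
  and key: "\<And>k W. 1 \<le> k \<Longrightarrow> W \<in> borel_measurable (F (k-1)) \<Longrightarrow>
     (\<integral>\<^sup>+\<omega>. W \<omega> * indicator {\<omega>. \<xi> k \<omega> = 1} \<omega> \<partial>M) \<le> (\<integral>\<^sup>+\<omega>. W \<omega> * indicator {\<omega>. \<xi> k \<omega> = -1} \<omega> \<partial>M)"
begin

definition S :: "nat \<Rightarrow> 'a \<Rightarrow> real" where "S k \<omega> = (\<Sum>j\<in>{1..k}. \<xi> j \<omega>)"
definition C :: "nat \<Rightarrow> 'a \<Rightarrow> real" where "C k \<omega> = (\<Sum>j\<in>{1..k}. \<bar>\<xi> j \<omega>\<bar>)"
definition R :: "real \<Rightarrow> real \<Rightarrow> nat \<Rightarrow> 'a \<Rightarrow> bool" where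
  "R a b k \<omega> \<longleftrightarrow> (\<exists>j\<in>{1..k}. S j \<omega> > a * C j \<omega> + b)"
definition phi :: "real \<Rightarrow> real \<Rightarrow> real" where "phi l x = exp (l * x - l^2 / 2 * \<bar>x\<bar>)"
definition Z :: "real \<Rightarrow> nat \<Rightarrow> 'a \<Rightarrow> real" where "Z l k \<omega> = exp (l * S k \<omega> - l^2 / 2 * C k \<omega>)"

primrec Y :: "real \<Rightarrow> real \<Rightarrow> nat \<Rightarrow> 'a \<Rightarrow> ennreal" where
  "Y a b 0 \<omega> = 1"
| "Y a b (Suc k) \<omega> = (if R a b k \<omega> then Y a b k \<omega> else Y a b k \<omega> * ennreal (phi (2*a) (\<xi> (Suc k) \<omega>)))"

lemma S_Suc: "S (Suc k) \<omega> = S k \<omega> + \<xi> (Suc k) \<omega>"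
  unfolding S_def by (simp add: add.commute)
lemma C_Suc: "C (Suc k) \<omega> = C k \<omega> + \<bar>\<xi> (Suc k) \<omega>\<bar>"
  unfolding C_def by (simp add: add.commute)

lemma Z_Suc: "Z l (Suc k) \<omega> = Z l k \<omega> * phi l (\<xi> (Suc k) \<omega>)"
proof -
  have "l * S (Suc k) \<omega> - l^2 / 2 * C (Suc k) \<omega> = (l * S k \<omega> - l^2 / 2 * C k \<omega>) + (l * \<xi> (Suc k) \<omega> - l^2 / 2 * \<bar>\<xi> (Suc k) \<omega>\<bar>)"
    unfolding S_Suc C_Suc by (simp add: algebra_simps)
  then show ?thesis unfolding Z_def phi_def by (simp only: exp_add)
qed

lemma R_Suc: "R a b (Suc k) \<omega> \<longleftrightarrow> R a b k \<omega> \<or> S (Suc k) \<omega> > a * C (Suc k) \<omega> + b"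
proof -
  have "{1..Suc k} = insert (Suc k) {1..k}" by auto
  then show ?thesis unfolding R_def by auto
qed

lemma Y_notR: "\<not> R a b k \<omega> \<Longrightarrow> Y a b k \<omega> = ennreal (Z (2*a) k \<omega>)"
proof (induction k)
  case 0 then show ?case by (simp add: Z_def S_def C_def)
next
  case (Suc k)
  then have "\<not> R a b k \<omega>" using R_Suc by blast
  moreover have "ennreal (Z (2*a) k \<omega>) * ennreal (phi (2*a) (\<xi> (Suc k) \<omega>)) = ennreal (Z (2*a) (Suc k) \<omega>)"
    unfolding Z_Suc by (rule ennreal_mult[symmetric]) (auto simp: Z_def phi_def)
  ultimately show ?case using Suc by simp
qed

lemma Y_R:
  assumes "0 < a" shows "R a b k \<omega> \<Longrightarrow> ennreal (exp (2*a*b)) \<le> Y a b k \<omega>"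
proof (induction k)
  case 0 then show ?case by (simp add: R_def)
next
  case (Suc k)
  show ?case
  proof (cases "R a b k \<omega>")
    case True then show ?thesis using Suc by simp
  next
    case False
    then have cr: "S (Suc k) \<omega> > a * C (Suc k) \<omega> + b" using Suc.prems R_Suc by blast
    have "Y a b (Suc k) \<omega> = ennreal (Z (2*a) (Suc k) \<omega>)"
    proof -
      have "ennreal (Z (2*a) k \<omega>) * ennreal (phi (2*a) (\<xi> (Suc k) \<omega>)) = ennreal (Z (2*a) (Suc k) \<omega>)"
        unfolding Z_Suc by (rule ennreal_mult[symmetric]) (auto simp: Z_def phi_def)
      then show ?thesis using False Y_notR[OF False] by simp
    qed
    moreover have "exp (2*a*b) \<le> Z (2*a) (Suc k) \<omega>"
    proof -
      have "2*a*b \<le> 2*a * S (Suc k) \<omega> - (2*a)^2 / 2 * C (Suc k) \<omega>"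
      proof -
        have "2*a*(a * C (Suc k) \<omega> + b) \<le> 2*a * S (Suc k) \<omega>"
          using cr assms by (intro mult_left_mono) auto
        then show ?thesis by (simp add: power2_eq_square algebra_simps)
      qed
      then show ?thesis unfolding Z_def by simp
    qed
    ultimately show ?thesis by (simp add: ennreal_leI)
  qed
qed

lemma phi_meas: "phi l \<in> borel_measurable borel"
  unfolding phi_def by measurable

lemma meas_M: "f \<in> measurable (F k) N \<Longrightarrow> f \<in> measurable M N"
  using measurable_from_subalg[OF subalg] .

lemma S_meas: "k \<le> m \<Longrightarrow> S k \<in> borel_measurable (F m)"
  unfolding S_def by (intro borel_measurable_sum) (auto intro: meas)
lemma C_meas: "k \<le> m \<Longrightarrow> C k \<in> borel_measurable (F m)"
  unfolding C_def by (intro borel_measurable_sum borel_measurable_abs) (auto intro: meas)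

lemma R_meas: "k \<le> m \<Longrightarrow> {\<omega>\<in>space (F m). R a b k \<omega>} \<in> sets (F m)"
proof -
  assume km: "k \<le> m"
  have "{\<omega>\<in>space (F m). R a b k \<omega>} = (\<Union>j\<in>{1..k}. {\<omega>\<in>space (F m). S j \<omega> > a * C j \<omega> + b})"
    unfolding R_def by auto
  also have "\<dots> \<in> sets (F m)"
    using km by (intro sets.finite_UN) (auto intro!: S_meas C_meas borel_measurable_less borel_measurable_add borel_measurable_times borel_measurable_const)
  finally show ?thesis .
qed

lemma R_pred: "k \<le> m \<Longrightarrow> Measurable.pred (F m) (R a b k)"
  using R_meas unfolding pred_def by simp

lemma Y_meas: "k \<le> m \<Longrightarrow> Y a b k \<in> borel_measurable (F m)"
proof (induction k)
  case 0 then show ?case by simp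
next
  case (Suc k)
  have "Y a b (Suc k) = (\<lambda>\<omega>. if R a b k \<omega> then Y a b k \<omega> else Y a b k \<omega> * ennreal (phi (2*a) (\<xi> (Suc k) \<omega>)))"
    by auto
  moreover have "(\<lambda>\<omega>. if R a b k \<omega> then Y a b k \<omega> else Y a b k \<omega> * ennreal (phi (2*a) (\<xi> (Suc k) \<omega>))) \<in> borel_measurable (F m)"
    using Suc R_meas[of k m a b] by (intro measurable_If borel_measurable_times_ennreal measurable_compose[OF _ measurable_ennreal]
      measurable_compose[OF _ phi_meas]) (auto intro!: meas)
  ultimately show ?case by simp
qed

lemma phi_split:
  assumes "\<omega> \<in> space M"
  shows "ennreal (phi l (\<xi> K \<omega>)) = indicator {\<omega>. \<xi> K \<omega> = 0} \<omega>
     + ennreal (exp (l - l^2/2)) * indicator {\<omega>. \<xi> K \<omega> = 1} \<omega>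
     + ennreal (exp (- l - l^2/2)) * indicator {\<omega>. \<xi> K \<omega> = -1} \<omega>"
  using vals[OF assms, of K] by (auto simp: phi_def indicator_def)

lemma Y_step:
  assumes a: "0 < a"
  shows "(\<integral>\<^sup>+\<omega>. Y a b (Suc k) \<omega> \<partial>M) \<le> (\<integral>\<^sup>+\<omega>. Y a b k \<omega> \<partial>M)"
proof -
  define l where "l = 2 * a"
  define K where "K = Suc k"
  define W where "W \<omega> = (if R a b k \<omega> then 0 else Y a b k \<omega>)" for \<omega>
  define V where "V \<omega> = (if R a b k \<omega> then Y a b k \<omega> else 0)" for \<omega>
  have l0: "0 \<le> l" using a unfolding l_def by simp
  have WF: "W \<in> borel_measurable (F k)" unfolding W_def
    using R_meas[of k k a b] Y_meas[of k k a b] by (intro measurable_If) auto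
  have VF: "V \<in> borel_measurable (F k)" unfolding V_def
    using R_meas[of k k a b] Y_meas[of k k a b] by (intro measurable_If) auto
  have [measurable]: "W \<in> borel_measurable M" "V \<in> borel_measurable M" "Y a b k \<in> borel_measurable M"
    using meas_M[OF WF] meas_M[OF VF] meas_M[OF Y_meas[of k k a b]] by auto
  have [measurable]: "\<xi> K \<in> borel_measurable M" using meas_M[OF meas[of K K]] unfolding K_def by simp
  have [measurable]: "phi l \<in> borel_measurable borel" by (rule phi_meas)
  define A' where "A' = exp (l - l^2/2)"
  define B' where "B' = exp (- l - l^2/2)"
  define a0 where "a0 = (\<integral>\<^sup>+\<omega>. W \<omega> * indicator {\<omega>. \<xi> K \<omega> = 0} \<omega> \<partial>M)"
  define a1 where "a1 = (\<integral>\<^sup>+\<omega>. W \<omega> * indicator {\<omega>. \<xi> K \<omega> = 1} \<omega> \<partial>M)"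
  define a2 where "a2 = (\<integral>\<^sup>+\<omega>. W \<omega> * indicator {\<omega>. \<xi> K \<omega> = -1} \<omega> \<partial>M)"
  have Y_eq: "Y a b (Suc k) \<omega> = V \<omega> + W \<omega> * ennreal (phi l (\<xi> K \<omega>))" for \<omega>
    unfolding V_def W_def K_def l_def by simp
  have "(\<integral>\<^sup>+\<omega>. Y a b (Suc k) \<omega> \<partial>M) = (\<integral>\<^sup>+\<omega>. V \<omega> \<partial>M) + (\<integral>\<^sup>+\<omega>. W \<omega> * ennreal (phi l (\<xi> K \<omega>)) \<partial>M)"
    unfolding Y_eq by (rule nn_integral_add) measurable
  also have "(\<integral>\<^sup>+\<omega>. W \<omega> * ennreal (phi l (\<xi> K \<omega>)) \<partial>M) =
      (\<integral>\<^sup>+\<omega>. W \<omega> * indicator {\<omega>. \<xi> K \<omega> = 0} \<omega> + ennreal A' * (W \<omega> * indicator {\<omega>. \<xi> K \<omega> = 1} \<omega>)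
           + ennreal B' * (W \<omega> * indicator {\<omega>. \<xi> K \<omega> = -1} \<omega>) \<partial>M)"
    by (intro nn_integral_cong) (simp add: phi_split A'_def B'_def distrib_left mult_ac)
  also have "\<dots> = a0 + ennreal A' * a1 + ennreal B' * a2"
    unfolding a0_def a1_def a2_def
    by (simp add: nn_integral_add nn_integral_cmult)
  also have "\<dots> \<le> a0 + (a1 + a2)"
  proof -
    have "a1 \<le> a2" unfolding a1_def a2_def using key[of K W] WF unfolding K_def by simp
    moreover have "B' \<le> A'" unfolding A'_def B'_def using l0 by simp
    moreover have "A' + B' \<le> 2"
    proof -
      have A'e: "A' = exp l * exp (- (l^2/2))" unfolding A'_def by (simp add: mult_exp_exp)
      have B'e: "B' = exp (-l) * exp (- (l^2/2))" unfolding B'_def by (simp add: mult_exp_exp)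
      have "A' + B' = 2 * ((exp l + exp (-l)) / 2 * exp (- (l^2/2)))"
        unfolding A'e B'e by (simp add: algebra_simps)
      also have "\<dots> \<le> 2 * (exp (l^2/2) * exp (- (l^2/2)))"
        using cosh_bound[OF l0] by (intro mult_left_mono mult_right_mono) auto
      also have "\<dots> = 2" by (simp add: exp_minus)
      finally show ?thesis .
    qed
    ultimately have "ennreal A' * a1 + ennreal B' * a2 \<le> a1 + a2"
      by (intro ennreal_ab) (auto simp: B'_def)
    then show ?thesis by (simp add: add.assoc add_left_mono)
  qed
  also have "a0 + (a1 + a2) = (\<integral>\<^sup>+\<omega>. W \<omega> \<partial>M)"
  proof -
    have "a0 + (a1 + a2) = (\<integral>\<^sup>+\<omega>. W \<omega> * indicator {\<omega>. \<xi> K \<omega> = 0} \<omega> + (W \<omega> * indicator {\<omega>. \<xi> K \<omega> = 1} \<omega>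
           + W \<omega> * indicator {\<omega>. \<xi> K \<omega> = -1} \<omega>) \<partial>M)"
      unfolding a0_def a1_def a2_def by (simp add: nn_integral_add)
    also have "\<dots> = (\<integral>\<^sup>+\<omega>. W \<omega> \<partial>M)"
      by (intro nn_integral_cong) (use vals in \<open>auto simp: indicator_def\<close>)
    finally show ?thesis .
  qed
  finally have "(\<integral>\<^sup>+\<omega>. Y a b (Suc k) \<omega> \<partial>M) \<le> (\<integral>\<^sup>+\<omega>. V \<omega> \<partial>M) + (\<integral>\<^sup>+\<omega>. W \<omega> \<partial>M)"
    by (simp add: add_left_mono)
  also have "\<dots> = (\<integral>\<^sup>+\<omega>. V \<omega> + W \<omega> \<partial>M)" by (simp add: nn_integral_add)
  also have "\<dots> = (\<integral>\<^sup>+\<omega>. Y a b k \<omega> \<partial>M)" by (intro nn_integral_cong) (simp add: V_def W_def)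
  finally show ?thesis .
qed

lemma Y_int: "0 < a \<Longrightarrow> (\<integral>\<^sup>+\<omega>. Y a b k \<omega> \<partial>M) \<le> 1"
proof (induction k)
  case 0 then show ?case by (simp add: emeasure_space_1)
next
  case (Suc k) then show ?case using Y_step[of a b k] by simp
qed

lemma ville_bound:
  assumes a: "0 < a"
  shows "measure M {\<omega>\<in>space M. R a b n \<omega>} \<le> exp (- 2 * a * b)"
proof -
  define E where "E = {\<omega>\<in>space M. R a b n \<omega>}"
  have EM: "E \<in> sets M" unfolding E_def using R_meas[of n n a b] subalg[of n]
    unfolding subalgebra_def by auto
  have "ennreal (exp (2*a*b)) * emeasure M E = (\<integral>\<^sup>+\<omega>. ennreal (exp (2*a*b)) * indicator E \<omega> \<partial>M)"
    using EM by (simp add: nn_integral_cmult_indicator)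
  also have "\<dots> \<le> (\<integral>\<^sup>+\<omega>. Y a b n \<omega> \<partial>M)"
    by (intro nn_integral_mono) (auto simp: E_def indicator_def intro: Y_R[OF a])
  also have "\<dots> \<le> 1" by (rule Y_int[OF a])
  finally have "ennreal (exp (2*a*b)) * ennreal (measure M E) \<le> 1" by (simp add: emeasure_eq_measure)
  then have "exp (2*a*b) * measure M E \<le> 1" by (simp add: ennreal_mult[symmetric])
  then have "measure M E \<le> 1 / exp (2*a*b)" by (simp add: field_simps)
  then show ?thesis unfolding E_def by (simp add: exp_minus field_simps)
qed

end

context ville begin

definition Cn :: "nat \<Rightarrow> 'a \<Rightarrow> nat" where "Cn k \<omega> = card {j\<in>{1..k}. \<xi> j \<omega> \<noteq> 0}"

lemma C_Cn: "\<omega> \<in> space M \<Longrightarrow> C k \<omega> = real (Cn k \<omega>)"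
proof -
  assume w: "\<omega> \<in> space M"
  have "C k \<omega> = (\<Sum>j\<in>{1..k}. if \<xi> j \<omega> \<noteq> 0 then 1 else 0)"
    unfolding C_def using vals[OF w] by (intro sum.cong) (auto, metis abs_minus_cancel abs_one)
  also have "\<dots> = real (card {j\<in>{1..k}. \<xi> j \<omega> \<noteq> 0})"
    by (simp add: sum.If_cases) (rule arg_cong[where f=card], auto)
  finally show ?thesis unfolding Cn_def .
qed

lemma S_le_C: "\<omega> \<in> space M \<Longrightarrow> S k \<omega> \<le> C k \<omega>"
  unfolding S_def C_def by (intro sum_mono) auto

lemma Cn_le: "Cn k \<omega> \<le> k"
proof -
  have "Cn k \<omega> \<le> card {1..k}" unfolding Cn_def by (intro card_mono) auto
  then show ?thesis by simp
qed

lemma R_sets: "{\<omega>\<in>space M. R a b n \<omega>} \<in> sets M"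
  using R_meas[of n n a b] subalg[of n] unfolding subalgebra_def by auto

lemma bound_lin:
  assumes a: "0 < \<alpha>" "\<alpha> < 1" and m: "0 < m"
  shows "measure M {\<omega>\<in>space M. \<exists>k\<in>{1..n}. 1 \<le> Cn k \<omega> \<and> S k \<omega> > u_lin m \<alpha> (Cn k \<omega>)} \<le> \<alpha>"
proof -
  define A where "A = sqrt (- ln \<alpha> / (2 * m))"
  define B where "B = sqrt (- m * ln \<alpha> / 2)"
  have la: "0 < - ln \<alpha>" using a by simp
  have A0: "0 < A" unfolding A_def using la m by (simp add: divide_neg_pos)
  have AB: "A * B = - ln \<alpha> / 2"
  proof -
    have e: "(- ln \<alpha> / (2 * m)) * (- m * ln \<alpha> / 2) = (- ln \<alpha> / 2)^2" using m by (simp add: field_simps power2_eq_square)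
    have "A * B = sqrt ((- ln \<alpha> / (2 * m)) * (- m * ln \<alpha> / 2))" unfolding A_def B_def by (simp only: real_sqrt_mult)
    then show ?thesis using la e by simp
  qed
  have "{\<omega>\<in>space M. \<exists>k\<in>{1..n}. 1 \<le> Cn k \<omega> \<and> S k \<omega> > u_lin m \<alpha> (Cn k \<omega>)} \<subseteq> {\<omega>\<in>space M. R A B n \<omega>}"
    unfolding R_def u_lin_def A_def[symmetric] B_def[symmetric] using C_Cn by fastforce
  then have "measure M {\<omega>\<in>space M. \<exists>k\<in>{1..n}. 1 \<le> Cn k \<omega> \<and> S k \<omega> > u_lin m \<alpha> (Cn k \<omega>)} \<le> measure M {\<omega>\<in>space M. R A B n \<omega>}"
    by (intro finite_measure_mono R_sets)
  also have "\<dots> \<le> exp (- 2 * A * B)" by (rule ville_bound[OF A0])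
  also have "- 2 * A * B = ln \<alpha>" using AB by (simp add: mult.assoc)
  finally show ?thesis using a by simp
qed

lemma bound_curved:
  assumes a: "0 < \<alpha>" "\<alpha> < 1"
  shows "measure M {\<omega>\<in>space M. \<exists>k\<in>{1..n}. 1 \<le> Cn k \<omega> \<and> S k \<omega> > u_curved \<alpha> (Cn k \<omega>)} \<le> \<alpha>"
proof -
  define E where "E j = {\<omega>\<in>space M. R (aj \<alpha> j) (bj \<alpha> j) n \<omega>}" for j
  have sub: "{\<omega>\<in>space M. \<exists>k\<in>{1..n}. 1 \<le> Cn k \<omega> \<and> S k \<omega> > u_curved \<alpha> (Cn k \<omega>)} \<subseteq> (\<Union>j\<in>{..<n}. E j)"
  proof safe
    fix \<omega> k assume w: "\<omega> \<in> space M" and k: "k \<in> {1..n}" and c1: "1 \<le> Cn k \<omega>"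
      and cr: "S k \<omega> > u_curved \<alpha> (Cn k \<omega>)"
    define c where "c = Cn k \<omega>"
    have Sc: "S k \<omega> \<le> real c" using S_le_C[OF w, of k] C_Cn[OF w, of k] unfolding c_def by simp
    have "\<not> c \<le> 5"
    proof
      assume "c \<le> 5"
      then have "real c \<le> u_curved \<alpha> c" using small_c[OF a, of c] c1 unfolding c_def by simp
      then show False using Sc cr unfolding c_def by simp
    qed
    then obtain j where j: "Kj j \<le> real c" "real c \<le> 2 * Kj j" "j < c" using epoch_exists[of c] by auto
    have "aj \<alpha> j * real c + bj \<alpha> j \<le> u_curved \<alpha> c" by (rule line_le_u[OF a j(1,2)])
    then have "S k \<omega> > aj \<alpha> j * C k \<omega> + bj \<alpha> j" using cr C_Cn[OF w, of k] unfolding c_def by simp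
    then have "\<omega> \<in> E j" unfolding E_def R_def using w k by auto
    moreover have "j < n" using j(3) Cn_le[of k \<omega>] k unfolding c_def by simp
    ultimately show "\<omega> \<in> (\<Union>j\<in>{..<n}. E j)" by auto
  qed
  have "measure M {\<omega>\<in>space M. \<exists>k\<in>{1..n}. 1 \<le> Cn k \<omega> \<and> S k \<omega> > u_curved \<alpha> (Cn k \<omega>)} \<le> measure M (\<Union>j\<in>{..<n}. E j)"
    using sub by (intro finite_measure_mono) (auto simp: E_def intro!: sets.finite_UN R_sets)
  also have "\<dots> \<le> (\<Sum>j<n. measure M (E j))"
    by (intro finite_measure_subadditive_finite) (auto simp: E_def intro: R_sets)
  also have "\<dots> \<le> (\<Sum>j<n. \<alpha> * wj j)"
  proof (intro sum_mono)
    fix j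
    have "measure M (E j) \<le> exp (- 2 * aj \<alpha> j * bj \<alpha> j)"
      unfolding E_def by (rule ville_bound[OF aj_pos[OF a]])
    also have "\<dots> = \<alpha> * wj j" using ajbj[OF a, of j] by (simp add: mult.assoc)
    finally show "measure M (E j) \<le> \<alpha> * wj j" .
  qed
  also have "\<dots> = \<alpha> * (\<Sum>j<n. wj j)" by (simp add: sum_distrib_left)
  also have "\<dots> \<le> \<alpha> * 1" using wj_sum[of n] a by (intro mult_left_mono) auto
  finally show ?thesis by simp
qed

lemma bound_u:
  assumes a: "0 < \<alpha>" "\<alpha> < 1" and u: "(\<exists>m>0. u = u_lin m \<alpha>) \<or> u = u_curved \<alpha>"
  shows "measure M {\<omega>\<in>space M. \<exists>k\<in>{1..n}. 1 \<le> Cn k \<omega> \<and> S k \<omega> > u (Cn k \<omega>)} \<le> \<alpha>"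
  using u bound_lin[OF a] bound_curved[OF a] by auto

lemma rej_sets: "{\<omega>\<in>space M. \<exists>k\<in>{1..n}. 1 \<le> Cn k \<omega> \<and> S k \<omega> > u (Cn k \<omega>)} \<in> sets M"
proof -
  have Sm[measurable]: "\<And>k. S k \<in> borel_measurable M" using S_meas meas_M by blast
  have Cm[measurable]: "\<And>k. C k \<in> borel_measurable M" using C_meas meas_M by blast
  have "{\<omega>\<in>space M. \<exists>k\<in>{1..n}. 1 \<le> Cn k \<omega> \<and> S k \<omega> > u (Cn k \<omega>)}
      = (\<Union>k\<in>{1..n}. \<Union>c\<in>{1..k}. {\<omega>\<in>space M. C k \<omega> = real c \<and> S k \<omega> > u c})"
  proof safe
    fix \<omega> k assume w: "\<omega> \<in> space M" and k: "k \<in> {1..n}" "1 \<le> Cn k \<omega>" "u (Cn k \<omega>) < S k \<omega>"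
    then show "\<omega> \<in> (\<Union>k\<in>{1..n}. \<Union>c\<in>{1..k}. {\<omega> \<in> space M. C k \<omega> = real c \<and> u c < S k \<omega>})"
      using C_Cn[OF w, of k] Cn_le[of k \<omega>] by (intro UN_I[of k] UN_I[of "Cn k \<omega>"]) auto
  next
    fix \<omega> k c assume w: "\<omega> \<in> space M" "k \<in> {1..n}" "c \<in> {1..k}" "C k \<omega> = real c" "u c < S k \<omega>"
    then show "\<exists>k\<in>{1..n}. 1 \<le> Cn k \<omega> \<and> u (Cn k \<omega>) < S k \<omega>"
      using C_Cn[OF w(1), of k] by (intro bexI[of _ k]) auto
  qed
  also have "\<dots> \<in> sets M" by measurable
  finally show ?thesis .
qed

lemma bound_u_all:
  assumes a: "0 < \<alpha>" "\<alpha> < 1" and u: "(\<exists>m>0. u = u_lin m \<alpha>) \<or> u = u_curved \<alpha>"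
  shows "measure M {\<omega>\<in>space M. \<exists>k\<ge>1. 1 \<le> Cn k \<omega> \<and> S k \<omega> > u (Cn k \<omega>)} \<le> \<alpha>"
proof -
  define A where "A n = {\<omega>\<in>space M. \<exists>k\<in>{1..n}. 1 \<le> Cn k \<omega> \<and> S k \<omega> > u (Cn k \<omega>)}" for n
  have inc: "incseq A" unfolding A_def incseq_def by fastforce
  have As: "range A \<subseteq> sets M" unfolding A_def using rej_sets by auto
  have U: "(\<Union>n. A n) = {\<omega>\<in>space M. \<exists>k\<ge>1. 1 \<le> Cn k \<omega> \<and> S k \<omega> > u (Cn k \<omega>)}"
    unfolding A_def by (auto, metis atLeastAtMost_iff order_refl)
  have "emeasure M (\<Union>n. A n) = (SUP n. emeasure M (A n))" using SUP_emeasure_incseq[OF As inc] by simp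
  also have "\<dots> \<le> ennreal \<alpha>"
  proof (rule SUP_least)
    fix n
    have "measure M (A n) \<le> \<alpha>" unfolding A_def by (rule bound_u[OF a u])
    then show "emeasure M (A n) \<le> ennreal \<alpha>" by (simp add: emeasure_eq_measure ennreal_leI)
  qed
  finally have "ennreal (measure M (\<Union>n. A n)) \<le> ennreal \<alpha>" by (simp add: emeasure_eq_measure)
  then show ?thesis unfolding U using a by (simp add: ennreal_le_iff)
qed

end

lemma (in prob_space) indep_pi_rest:
  assumes hyps: "pvalue_hyps M X I x p" and i: "i \<in> I"
  shows "distr M ((PiM I (\<lambda>_. X) \<Otimes>\<^sub>M PiM (I - {i}) (\<lambda>_. borel)) \<Otimes>\<^sub>M lborel)
             (\<lambda>\<omega>. ((restrict (\<lambda>j. x j \<omega>) I, restrict (\<lambda>j. p j \<omega>) (I - {i})), p i \<omega>))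
         = distr M (PiM I (\<lambda>_. X) \<Otimes>\<^sub>M PiM (I - {i}) (\<lambda>_. borel))
             (\<lambda>\<omega>. (restrict (\<lambda>j. x j \<omega>) I, restrict (\<lambda>j. p j \<omega>) (I - {i})))
           \<Otimes>\<^sub>M distr M lborel (p i)"
proof -
  define \<Omega> where "\<Omega> = space M"
  define Q where "Q \<omega> = restrict (\<lambda>j. p j \<omega>) (I - {i})" for \<omega>
  define Xv where "Xv \<omega> = restrict (\<lambda>j. x j \<omega>) I" for \<omega>
  define pv where "pv \<omega> = restrict (\<lambda>j. p j \<omega>) I" for \<omega>
  define V where "V \<omega> = (Xv \<omega>, Q \<omega>)" for \<omega>
  define NX where "NX = PiM I (\<lambda>_. X)"
  define NQ where "NQ = PiM (I - {i}) (\<lambda>_. borel :: real measure)"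
  define NP where "NP = PiM I (\<lambda>_. borel :: real measure)"
  have xm: "\<And>j. j \<in> I \<Longrightarrow> x j \<in> measurable M X" using hyps unfolding pvalue_hyps_def by auto
  have ivars: "indep_vars (\<lambda>_. borel) p I" using hyps unfolding pvalue_hyps_def by auto
  have pm: "\<And>j. j \<in> I \<Longrightarrow> p j \<in> borel_measurable M" using ivars unfolding indep_vars_def2 by auto
  have xp: "indep_set (preimgs \<Omega> pv NP) (preimgs \<Omega> Xv NX)"
    using hyps unfolding pvalue_hyps_def pv_def Xv_def NP_def NX_def \<Omega>_def by auto
  have Xvm: "Xv \<in> measurable M NX" unfolding Xv_def NX_def by (intro measurable_restrict xm)
  have Qm: "Q \<in> measurable M NQ" unfolding Q_def NQ_def by (intro measurable_restrict pm) auto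
  have pvm: "pv \<in> measurable M NP" unfolding pv_def NP_def by (intro measurable_restrict pm)
  have Vm: "V \<in> measurable M (NX \<Otimes>\<^sub>M NQ)" unfolding V_def using Xvm Qm by (rule measurable_Pair)
  define K where "K b = (if b then {i} else I - {i})" for b
  have "indep_vars (\<lambda>b. PiM (K b) (\<lambda>_. borel)) (\<lambda>b \<omega>. restrict (\<lambda>j. p j \<omega>) (K b)) UNIV"
    by (rule indep_vars_restrict[OF ivars]) (auto simp: K_def disjoint_family_on_def i)
  moreover have "(\<lambda>b. PiM (K b) (\<lambda>_. borel)) = case_bool (PiM {i} (\<lambda>_. borel)) NQ"
    by (rule ext) (auto simp: K_def NQ_def split: bool.split)
  moreover have "(\<lambda>b \<omega>. restrict (\<lambda>j. p j \<omega>) (K b)) = case_bool (\<lambda>\<omega>. restrict (\<lambda>j. p j \<omega>) {i}) Q"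
    by (rule ext) (auto simp: K_def Q_def split: bool.split)
  ultimately have "indep_var (PiM {i} (\<lambda>_. borel)) (\<lambda>\<omega>. restrict (\<lambda>j. p j \<omega>) {i}) NQ Q"
    unfolding indep_var_def by simp
  note ipQ = this
  have step1: "prob (p i -` A \<inter> Q -` B \<inter> \<Omega>) = prob (p i -` A \<inter> \<Omega>) * prob (Q -` B \<inter> \<Omega>)"
    if A: "A \<in> sets borel" and B: "B \<in> sets NQ" for A B
  proof -
    define A' where "A' = (\<lambda>f. f i) -` A \<inter> space (PiM {i} (\<lambda>_. borel :: real measure))"
    have A': "A' \<in> sets (PiM {i} (\<lambda>_. borel :: real measure))" unfolding A'_def
      by (rule measurable_sets[OF measurable_component_singleton[of i "{i}" "\<lambda>_. borel :: real measure"] A]) simp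
    have "prob ((\<lambda>\<omega>. (restrict (\<lambda>j. p j \<omega>) {i}, Q \<omega>)) -` (A' \<times> B) \<inter> space M)
        = prob ((\<lambda>\<omega>. restrict (\<lambda>j. p j \<omega>) {i}) -` A' \<inter> space M) * prob (Q -` B \<inter> space M)"
      by (rule indep_varD[OF ipQ A' B])
    moreover have "(\<lambda>\<omega>. (restrict (\<lambda>j. p j \<omega>) {i}, Q \<omega>)) -` (A' \<times> B) = p i -` A \<inter> Q -` B"
      unfolding A'_def by (auto simp: space_PiM)
    moreover have "(\<lambda>\<omega>. restrict (\<lambda>j. p j \<omega>) {i}) -` A' = p i -` A"
      unfolding A'_def by (auto simp: space_PiM)
    ultimately show ?thesis unfolding \<Omega>_def by simp
  qed
  have Qsp: "Q \<omega> \<in> space NQ" for \<omega> unfolding Q_def NQ_def by (simp add: space_PiM)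
  have pvsp: "pv \<omega> \<in> space NP" for \<omega> unfolding pv_def NP_def by (simp add: space_PiM)
  have Xvsp: "\<omega> \<in> \<Omega> \<Longrightarrow> Xv \<omega> \<in> space NX" for \<omega> using measurable_space[OF Xvm] unfolding \<Omega>_def by auto
  have resQ: "restrict (pv \<omega>) (I - {i}) = Q \<omega>" for \<omega> unfolding pv_def Q_def by auto
  have pvi: "pv \<omega> i = p i \<omega>" for \<omega> unfolding pv_def using i by simp
  have mres: "(\<lambda>f. restrict f (I - {i})) \<in> measurable NP NQ" unfolding NP_def NQ_def by (rule measurable_restrict_subset) auto
  have mcomp: "(\<lambda>f. f i) \<in> measurable NP borel" unfolding NP_def using i by (rule measurable_component_singleton)
  have step2: "prob (V -` (C \<times> B) \<inter> \<Omega> \<inter> (p i -` A \<inter> \<Omega>)) = prob (V -` (C \<times> B) \<inter> \<Omega>) * prob (p i -` A \<inter> \<Omega>)"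
    if A: "A \<in> sets borel" and B: "B \<in> sets NQ" and C: "C \<in> sets NX" for A B C
  proof -
    define D where "D = {f\<in>space NP. f i \<in> A \<and> restrict f (I - {i}) \<in> B}"
    define D' where "D' = {f\<in>space NP. restrict f (I - {i}) \<in> B}"
    have "D = ((\<lambda>f. f i) -` A \<inter> space NP) \<inter> ((\<lambda>f. restrict f (I - {i})) -` B \<inter> space NP)"
      unfolding D_def by auto
    then have D: "D \<in> sets NP"
      using measurable_sets[OF mcomp A] measurable_sets[OF mres B] by (simp only: sets.Int)
    have D': "D' \<in> sets NP" unfolding D'_def
      using measurable_sets[OF mres B] by (simp add: vimage_def Int_def conj_commute)
    have eD: "pv -` D \<inter> \<Omega> = p i -` A \<inter> Q -` B \<inter> \<Omega>" unfolding D_def using pvsp resQ pvi by auto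
    have eD': "pv -` D' \<inter> \<Omega> = Q -` B \<inter> \<Omega>" unfolding D'_def using pvsp resQ by auto
    have eV: "V -` (C \<times> B) \<inter> \<Omega> = Xv -` C \<inter> \<Omega> \<inter> (pv -` D' \<inter> \<Omega>)" unfolding V_def eD' by auto
    have mD: "pv -` D \<inter> \<Omega> \<in> preimgs \<Omega> pv NP" unfolding preimgs_def using D by auto
    have mD': "pv -` D' \<inter> \<Omega> \<in> preimgs \<Omega> pv NP" unfolding preimgs_def using D' by auto
    have mC: "Xv -` C \<inter> \<Omega> \<in> preimgs \<Omega> Xv NX" unfolding preimgs_def using C by auto
    have "V -` (C \<times> B) \<inter> \<Omega> \<inter> (p i -` A \<inter> \<Omega>) = (pv -` D \<inter> \<Omega>) \<inter> (Xv -` C \<inter> \<Omega>)"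
      unfolding eD V_def by auto
    then have "prob (V -` (C \<times> B) \<inter> \<Omega> \<inter> (p i -` A \<inter> \<Omega>)) = prob (pv -` D \<inter> \<Omega>) * prob (Xv -` C \<inter> \<Omega>)"
      using indep_setD[OF xp mD mC] by simp
    also have "\<dots> = prob (p i -` A \<inter> \<Omega>) * prob (Q -` B \<inter> \<Omega>) * prob (Xv -` C \<inter> \<Omega>)"
      unfolding eD using step1[OF A B] by simp
    also have "prob (V -` (C \<times> B) \<inter> \<Omega>) = prob (Q -` B \<inter> \<Omega>) * prob (Xv -` C \<inter> \<Omega>)"
      unfolding eV using indep_setD[OF xp mD' mC] eD' by (simp add: Int_commute)
    ultimately show ?thesis by (simp add: mult_ac)
  qed
  define G where "G = {V -` (C \<times> B) \<inter> \<Omega> | C B. C \<in> sets NX \<and> B \<in> sets NQ}"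
  define H where "H = {p i -` A \<inter> \<Omega> | A. A \<in> sets (borel :: real measure)}"
  have GPow: "G \<subseteq> Pow \<Omega>" unfolding G_def by auto
  have Gev: "G \<subseteq> events" unfolding G_def \<Omega>_def using Vm by (auto intro!: measurable_sets)
  have Hev: "H \<subseteq> events" unfolding H_def \<Omega>_def using pm[OF i] by (auto intro!: measurable_sets)
  have "indep_set G H"
  proof (rule indep_setI[OF Gev Hev])
    fix a b assume "a \<in> G" "b \<in> H"
    then show "prob (a \<inter> b) = prob a * prob b" unfolding G_def H_def using step2 by auto
  qed
  moreover have "Int_stable G"
  proof (rule Int_stableI)
    fix a b assume "a \<in> G" "b \<in> G"
    then obtain C B C' B' where "a = V -` (C \<times> B) \<inter> \<Omega>" "b = V -` (C' \<times> B') \<inter> \<Omega>"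
      "C \<in> sets NX" "B \<in> sets NQ" "C' \<in> sets NX" "B' \<in> sets NQ" unfolding G_def by auto
    then show "a \<inter> b \<in> G" unfolding G_def
      by (intro CollectI exI[of _ "C \<inter> C'"] exI[of _ "B \<inter> B'"]) auto
  qed
  moreover have "Int_stable H"
  proof (rule Int_stableI)
    fix a b assume "a \<in> H" "b \<in> H"
    then obtain A A' where "a = p i -` A \<inter> \<Omega>" "b = p i -` A' \<inter> \<Omega>" "A \<in> sets borel" "A' \<in> sets borel"
      unfolding H_def by auto
    then show "a \<inter> b \<in> H" unfolding H_def by (intro CollectI exI[of _ "A \<inter> A'"]) auto
  qed
  ultimately have iGH: "indep_set (sigma_sets \<Omega> G) (sigma_sets \<Omega> H)"
    unfolding \<Omega>_def by (rule indep_set_sigma_sets)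
  have Vsig: "V \<in> measurable (sigma \<Omega> G) (NX \<Otimes>\<^sub>M NQ)"
  proof (rule measurable_Pair[where f=Xv and g=Q, unfolded V_def[symmetric], folded V_def])
    show "Xv \<in> measurable (sigma \<Omega> G) NX"
    proof (rule measurableI)
      fix \<omega> assume "\<omega> \<in> space (sigma \<Omega> G)"
      then show "Xv \<omega> \<in> space NX" using Xvsp GPow by (simp add: space_measure_of_conv)
    next
      fix C assume C: "C \<in> sets NX"
      have "Xv -` C \<inter> \<Omega> = V -` (C \<times> space NQ) \<inter> \<Omega>" unfolding V_def using Qsp by auto
      also have "\<dots> \<in> G" unfolding G_def using C by blast
      finally show "Xv -` C \<inter> space (sigma \<Omega> G) \<in> sets (sigma \<Omega> G)"
        using GPow by (simp add: space_measure_of_conv sets_measure_of sigma_sets.Basic)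
    qed
    show "Q \<in> measurable (sigma \<Omega> G) NQ"
    proof (rule measurableI)
      fix \<omega> assume "\<omega> \<in> space (sigma \<Omega> G)"
      then show "Q \<omega> \<in> space NQ" using Qsp by simp
    next
      fix B assume B: "B \<in> sets NQ"
      have "Q -` B \<inter> \<Omega> = V -` (space NX \<times> B) \<inter> \<Omega>" unfolding V_def using Xvsp by auto
      also have "\<dots> \<in> G" unfolding G_def using B by blast
      finally show "Q -` B \<inter> space (sigma \<Omega> G) \<in> sets (sigma \<Omega> G)"
        using GPow by (simp add: space_measure_of_conv sets_measure_of sigma_sets.Basic)
    qed
  qed
  have sub1: "sigma_sets \<Omega> {V -` D \<inter> \<Omega> | D. D \<in> sets (NX \<Otimes>\<^sub>M NQ)} \<subseteq> sigma_sets \<Omega> G"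
  proof (rule sigma_sets_mono)
    show "{V -` D \<inter> \<Omega> | D. D \<in> sets (NX \<Otimes>\<^sub>M NQ)} \<subseteq> sigma_sets \<Omega> G"
      using measurable_sets[OF Vsig] GPow by (auto simp: space_measure_of_conv sets_measure_of)
  qed
  have sub2: "sigma_sets \<Omega> {p i -` A \<inter> \<Omega> | A. A \<in> sets lborel} \<subseteq> sigma_sets \<Omega> H"
    unfolding H_def by simp
  have iVP: "indep_set (sigma_sets \<Omega> {V -` D \<inter> \<Omega> | D. D \<in> sets (NX \<Otimes>\<^sub>M NQ)}) (sigma_sets \<Omega> {p i -` A \<inter> \<Omega> | A. A \<in> sets lborel})"
    unfolding indep_set_def
    by (rule indep_sets_mono_sets[OF iGH[unfolded indep_set_def]]) (use sub1 sub2 in \<open>auto split: bool.split\<close>)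
  have pim: "p i \<in> measurable M lborel" using pm[OF i] by simp
  interpret DV: prob_space "distr M (NX \<Otimes>\<^sub>M NQ) V" by (rule prob_space_distr[OF Vm])
  interpret DP: prob_space "distr M lborel (p i)" by (rule prob_space_distr[OF pim])
  have VPm: "(\<lambda>\<omega>. (V \<omega>, p i \<omega>)) \<in> measurable M ((NX \<Otimes>\<^sub>M NQ) \<Otimes>\<^sub>M lborel)"
    using Vm pim by (rule measurable_Pair)
  have "distr M (NX \<Otimes>\<^sub>M NQ) V \<Otimes>\<^sub>M distr M lborel (p i) = distr M ((NX \<Otimes>\<^sub>M NQ) \<Otimes>\<^sub>M lborel) (\<lambda>\<omega>. (V \<omega>, p i \<omega>))"
  proof (rule pair_measure_eqI)
    show "sigma_finite_measure (distr M (NX \<Otimes>\<^sub>M NQ) V)" ..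
    show "sigma_finite_measure (distr M lborel (p i))" ..
    show "sets (distr M (NX \<Otimes>\<^sub>M NQ) V \<Otimes>\<^sub>M distr M lborel (p i)) = sets (distr M ((NX \<Otimes>\<^sub>M NQ) \<Otimes>\<^sub>M lborel) (\<lambda>\<omega>. (V \<omega>, p i \<omega>)))"
      unfolding sets_distr by (rule sets_pair_measure_cong) (simp_all only: sets_distr)
  next
    fix A B assume A: "A \<in> sets (distr M (NX \<Otimes>\<^sub>M NQ) V)" and B: "B \<in> sets (distr M lborel (p i))"
    have a: "V -` A \<inter> \<Omega> \<in> sigma_sets \<Omega> {V -` D \<inter> \<Omega> | D. D \<in> sets (NX \<Otimes>\<^sub>M NQ)}"
      using A by (auto intro!: sigma_sets.Basic)
    have b: "p i -` B \<inter> \<Omega> \<in> sigma_sets \<Omega> {p i -` A \<inter> \<Omega> | A. A \<in> sets lborel}"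
      using B by (auto intro!: sigma_sets.Basic)
    have "emeasure M ((\<lambda>\<omega>. (V \<omega>, p i \<omega>)) -` (A \<times> B) \<inter> space M) = emeasure M ((V -` A \<inter> \<Omega>) \<inter> (p i -` B \<inter> \<Omega>))"
      unfolding \<Omega>_def by (intro arg_cong[where f="emeasure M"]) auto
    also have "\<dots> = ennreal (prob (V -` A \<inter> \<Omega>) * prob (p i -` B \<inter> \<Omega>))"
      using indep_setD[OF iVP a b] by (simp add: emeasure_eq_measure)
    also have "\<dots> = emeasure (distr M (NX \<Otimes>\<^sub>M NQ) V) A * emeasure (distr M lborel (p i)) B"
    proof -
      have A': "A \<in> sets (NX \<Otimes>\<^sub>M NQ)" using A by (simp only: sets_distr)
      have B': "B \<in> sets lborel" using B by (simp only: sets_distr)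
      have e1: "emeasure (distr M (NX \<Otimes>\<^sub>M NQ) V) A = ennreal (prob (V -` A \<inter> \<Omega>))"
        unfolding \<Omega>_def emeasure_distr[OF Vm A'] by (rule emeasure_eq_measure)
      have e2: "emeasure (distr M lborel (p i)) B = ennreal (prob (p i -` B \<inter> \<Omega>))"
        unfolding \<Omega>_def emeasure_distr[OF pim B'] by (rule emeasure_eq_measure)
      show ?thesis unfolding e1 e2 by (rule ennreal_mult) (rule measure_nonneg)+
    qed
    finally have fin: "emeasure M ((\<lambda>\<omega>. (V \<omega>, p i \<omega>)) -` (A \<times> B) \<inter> space M) = emeasure (distr M (NX \<Otimes>\<^sub>M NQ) V) A * emeasure (distr M lborel (p i)) B" .
    have AB: "A \<times> B \<in> sets ((NX \<Otimes>\<^sub>M NQ) \<Otimes>\<^sub>M lborel)"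
      using A B by (simp only: sets_distr) (rule pair_measureI)
    show "emeasure (distr M (NX \<Otimes>\<^sub>M NQ) V) A * emeasure (distr M lborel (p i)) B =
        emeasure (distr M ((NX \<Otimes>\<^sub>M NQ) \<Otimes>\<^sub>M lborel) (\<lambda>\<omega>. (V \<omega>, p i \<omega>))) (A \<times> B)"
      unfolding emeasure_distr[OF VPm AB] fin ..
  qed
  then show ?thesis unfolding V_def Xv_def Q_def NX_def NQ_def by simp
qed

lemma gtilde_meas[measurable]: "gtilde \<in> borel_measurable borel"
  unfolding gtilde_def frac_def by measurable

lemma gtilde_low: "0 \<le> t \<Longrightarrow> t < 1/2 \<Longrightarrow> gtilde t = t"
proof -
  assume t: "0 \<le> t" "t < 1/2"
  have "frac (t + 1/2) = t + 1/2" using t by (subst frac_eq) auto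
  then show ?thesis unfolding gtilde_def by simp
qed

lemma gtilde_high: "1/2 \<le> t \<Longrightarrow> t < 1 \<Longrightarrow> gtilde t = t - 1/2"
proof -
  assume t: "1/2 \<le> t" "t < 1"
  have "floor (t + 1/2) = 1" using t by (subst floor_eq_iff) auto
  then have "frac (t + 1/2) = t - 1/2" unfolding frac_def by simp
  then show ?thesis unfolding gtilde_def by simp
qed

lemma one_dim:
  fixes f :: "real \<Rightarrow> ennreal"
  assumes fm[measurable]: "f \<in> borel_measurable borel" and f0: "\<And>t. t \<notin> {0..1} \<Longrightarrow> f t = 0"
    and fmono: "mono_on {0..1} f" and E[measurable]: "E \<in> sets borel"
  shows "(\<integral>\<^sup>+t. f t * indicator {t. t < 1/2 \<and> gtilde t \<in> E} t \<partial>lborel)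
       \<le> (\<integral>\<^sup>+t. f t * indicator {t. \<not> t < 1/2 \<and> gtilde t \<in> E} t \<partial>lborel)"
proof -
  have "(\<integral>\<^sup>+t. f t * indicator {t. t < 1/2 \<and> gtilde t \<in> E} t \<partial>lborel)
      = (\<integral>\<^sup>+t. f t * indicator ({0..<1/2} \<inter> E) t \<partial>lborel)"
  proof (intro nn_integral_cong)
    fix t :: real
    show "f t * indicator {t. t < 1/2 \<and> gtilde t \<in> E} t = f t * indicator ({0..<1/2} \<inter> E) t"
    proof (cases "0 \<le> t")
      case True then show ?thesis using gtilde_low[OF True] by (auto simp: indicator_def)
    next
      case False then show ?thesis using f0[of t] by (auto simp: indicator_def)
    qed
  qed
  also have "\<dots> \<le> (\<integral>\<^sup>+t. f (1/2 + t) * indicator ({0..<1/2} \<inter> E) t \<partial>lborel)"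
  proof (intro nn_integral_mono)
    fix t :: real
    show "f t * indicator ({0..<1/2} \<inter> E) t \<le> f (1/2 + t) * indicator ({0..<1/2} \<inter> E) t"
    proof (cases "t \<in> {0..<1/2} \<inter> E")
      case True
      then have "f t \<le> f (1/2 + t)" by (intro mono_onD[OF fmono]) auto
      then show ?thesis using True by simp
    qed simp
  qed
  also have "\<dots> = (\<integral>\<^sup>+s. f s * indicator ({0..<1/2} \<inter> E) (s - 1/2) \<partial>lborel)"
    using nn_integral_real_affine[of "\<lambda>s. f s * indicator ({0..<1/2} \<inter> E) (s - 1/2)" 1 "1/2"]
    by simp
  also have "\<dots> \<le> (\<integral>\<^sup>+t. f t * indicator {t. \<not> t < 1/2 \<and> gtilde t \<in> E} t \<partial>lborel)"
  proof (intro nn_integral_mono)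
    fix s :: real
    show "f s * indicator ({0..<1/2} \<inter> E) (s - 1/2) \<le> f s * indicator {t. \<not> t < 1/2 \<and> gtilde t \<in> E} s"
    proof (cases "s - 1/2 \<in> {0..<1/2} \<inter> E")
      case True
      then have "1/2 \<le> s" "s < 1" by auto
      then have "gtilde s = s - 1/2" by (rule gtilde_high)
      then show ?thesis using True by (auto simp: indicator_def)
    qed simp
  qed
  finally show ?thesis .
qed

locale pv_setting = prob_space M for M :: "'a measure" +
  fixes X :: "'x measure" and I :: "nat set" and x :: "nat \<Rightarrow> 'a \<Rightarrow> 'x" and p :: "nat \<Rightarrow> 'a \<Rightarrow> real" and i :: nat
  assumes hyps: "pvalue_hyps M X I x p" and iI: "i \<in> I"
begin

definition V :: "'a \<Rightarrow> (nat \<Rightarrow> 'x) \<times> (nat \<Rightarrow> real)" where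
  "V \<omega> = (restrict (\<lambda>j. x j \<omega>) I, restrict (\<lambda>j. p j \<omega>) (I - {i}))"
definition NN :: "((nat \<Rightarrow> 'x) \<times> (nat \<Rightarrow> real)) measure" where
  "NN = PiM I (\<lambda>_. X) \<Otimes>\<^sub>M PiM (I - {i}) (\<lambda>_. borel)"
definition Psi where "Psi \<omega> = (V \<omega>, gtilde (p i \<omega>))"
definition Phi where "Phi = vimage_algebra (space M) Psi (NN \<Otimes>\<^sub>M borel)"

lemma xm: "j \<in> I \<Longrightarrow> x j \<in> measurable M X" using hyps unfolding pvalue_hyps_def by auto
lemma pm: "j \<in> I \<Longrightarrow> p j \<in> borel_measurable M"
  using hyps unfolding pvalue_hyps_def indep_vars_def2 by auto

lemma V_meas: "V \<in> measurable M NN"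
  unfolding V_def NN_def by (intro measurable_Pair measurable_restrict xm pm) auto

lemma Psi_meas: "Psi \<in> measurable M (NN \<Otimes>\<^sub>M borel)"
  unfolding Psi_def using V_meas pm[OF iI] by (intro measurable_Pair) (auto intro: measurable_compose[OF _ gtilde_meas])

lemma Phi_sub: "subalgebra M Phi"
  unfolding subalgebra_def Phi_def using sets_image_in_sets[OF refl Psi_meas] by simp

lemma space_Phi: "space Phi = space M" unfolding Phi_def by simp

lemma Phi_fun:
  assumes g: "g \<in> measurable (NN \<Otimes>\<^sub>M borel) Y" and eq: "\<And>\<omega>. \<omega> \<in> space M \<Longrightarrow> f \<omega> = g (Psi \<omega>)"
  shows "f \<in> measurable Phi Y"
proof -
  have "(\<lambda>\<omega>. g (Psi \<omega>)) \<in> measurable Phi Y"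
    unfolding Phi_def by (rule measurable_compose[OF measurable_vimage_algebra1 g])
      (use measurable_space[OF Psi_meas] in auto)
  then show ?thesis by (rule measurable_cong[THEN iffD2, rotated]) (simp add: space_Phi eq)
qed

lemma Phi_x: "j \<in> I \<Longrightarrow> x j \<in> measurable Phi X"
  by (rule Phi_fun[where g="\<lambda>z. fst (fst z) j"]) (auto simp: Psi_def V_def NN_def)

lemma Phi_p: "j \<in> I \<Longrightarrow> j \<noteq> i \<Longrightarrow> p j \<in> borel_measurable Phi"
  by (rule Phi_fun[where g="\<lambda>z. snd (fst z) j"]) (auto simp: Psi_def V_def NN_def)

lemma Phi_g: "j \<in> I \<Longrightarrow> (\<lambda>\<omega>. gtilde (p j \<omega>)) \<in> borel_measurable Phi"
proof (cases "j = i")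
  case True then show ?thesis by (intro Phi_fun[where g="\<lambda>z. snd z"]) (auto simp: Psi_def)
next
  case False
  assume "j \<in> I"
  then show ?thesis using False
    by (intro Phi_fun[where g="\<lambda>z. gtilde (snd (fst z) j)"]) (auto simp: Psi_def V_def NN_def)
qed

lemma VP_distr: "distr M (NN \<Otimes>\<^sub>M lborel) (\<lambda>\<omega>. (V \<omega>, p i \<omega>)) = distr M NN V \<Otimes>\<^sub>M distr M lborel (p i)"
  unfolding V_def NN_def by (rule indep_pi_rest[OF hyps iI])

lemma key_set_eq:
  assumes D0: "D0 \<in> sets (NN \<Otimes>\<^sub>M borel)" and L: "L \<in> sets borel"
    and f: "distributed M lborel (p i) f"
  shows "emeasure M (Psi -` D0 \<inter> space M \<inter> {\<omega>. p i \<omega> \<in> L})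
     = (\<integral>\<^sup>+v. (\<integral>\<^sup>+t. f t * indicator {t. t \<in> L \<and> gtilde t \<in> Pair v -` D0} t \<partial>lborel) \<partial>distr M NN V)"
proof -
  have pim: "p i \<in> measurable M lborel" using pm[OF iI] by simp
  have VPm: "(\<lambda>\<omega>. (V \<omega>, p i \<omega>)) \<in> measurable M (NN \<Otimes>\<^sub>M lborel)"
    using V_meas pim by (rule measurable_Pair)
  have fm[measurable]: "f \<in> borel_measurable borel" using f unfolding distributed_def by simp
  have df: "distr M lborel (p i) = density lborel f" using f unfolding distributed_def by simp
  interpret DP: prob_space "distr M lborel (p i)" by (rule prob_space_distr[OF pim])
  define DL where "DL = {z \<in> space (NN \<Otimes>\<^sub>M lborel). (fst z, gtilde (snd z)) \<in> D0 \<and> snd z \<in> L}"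
  have DL: "DL \<in> sets (NN \<Otimes>\<^sub>M lborel)"
  proof -
    have m: "(\<lambda>z. (fst z, gtilde (snd z))) \<in> measurable (NN \<Otimes>\<^sub>M lborel) (NN \<Otimes>\<^sub>M borel)"
      by (intro measurable_Pair measurable_fst) (auto intro: measurable_compose[OF measurable_snd gtilde_meas])
    have m2: "snd \<in> measurable (NN \<Otimes>\<^sub>M lborel) borel" by simp
    have "DL = ((\<lambda>z. (fst z, gtilde (snd z))) -` D0 \<inter> space (NN \<Otimes>\<^sub>M lborel)) \<inter> (snd -` L \<inter> space (NN \<Otimes>\<^sub>M lborel))"
      unfolding DL_def by auto
    then show ?thesis using measurable_sets[OF m D0] measurable_sets[OF m2 L] by (simp only: sets.Int)
  qed
  have "Psi -` D0 \<inter> space M \<inter> {\<omega>. p i \<omega> \<in> L} = (\<lambda>\<omega>. (V \<omega>, p i \<omega>)) -` DL \<inter> space M"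
    unfolding DL_def Psi_def using measurable_space[OF V_meas] by (auto simp: space_pair_measure)
  then have "emeasure M (Psi -` D0 \<inter> space M \<inter> {\<omega>. p i \<omega> \<in> L}) = emeasure (distr M (NN \<Otimes>\<^sub>M lborel) (\<lambda>\<omega>. (V \<omega>, p i \<omega>))) DL"
    using emeasure_distr[OF VPm DL] by simp
  also have "\<dots> = emeasure (distr M NN V \<Otimes>\<^sub>M distr M lborel (p i)) DL" unfolding VP_distr ..
  also have "\<dots> = (\<integral>\<^sup>+v. emeasure (distr M lborel (p i)) (Pair v -` DL) \<partial>distr M NN V)"
    by (rule DP.emeasure_pair_measure_alt) (use DL in \<open>simp cong: sets_pair_measure_cong\<close>)
  also have "\<dots> = (\<integral>\<^sup>+v. (\<integral>\<^sup>+t. f t * indicator {t. t \<in> L \<and> gtilde t \<in> Pair v -` D0} t \<partial>lborel) \<partial>distr M NN V)"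
  proof (intro nn_integral_cong)
    fix v assume v: "v \<in> space (distr M NN V)"
    have e: "Pair v -` DL = {t. t \<in> L \<and> gtilde t \<in> Pair v -` D0}"
      using v unfolding DL_def by (auto simp: space_pair_measure)
    have s: "{t. t \<in> L \<and> gtilde t \<in> Pair v -` D0} \<in> sets lborel"
      using sets_Pair1[OF DL, of v] unfolding e .
    show "emeasure (distr M lborel (p i)) (Pair v -` DL) = (\<integral>\<^sup>+t. f t * indicator {t. t \<in> L \<and> gtilde t \<in> Pair v -` D0} t \<partial>lborel)"
      unfolding e df using s by (simp add: emeasure_density nn_integral_set_ennreal mult.commute)
  qed
  finally show ?thesis .
qed

lemma key_set:
  assumes A: "A \<in> sets Phi"
  shows "emeasure M (A \<inter> {\<omega>. p i \<omega> < 1/2}) \<le> emeasure M (A \<inter> {\<omega>. \<not> p i \<omega> < 1/2})"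
proof -
  obtain f where f: "distributed M lborel (p i) f" and f0: "\<And>t. t \<notin> {0..1} \<Longrightarrow> f t = 0"
    and fmono: "mono_on {0..1} f"
    using hyps iI unfolding pvalue_hyps_def by blast
  have fm: "f \<in> borel_measurable borel" using f unfolding distributed_def by simp
  obtain D0 where D0: "D0 \<in> sets (NN \<Otimes>\<^sub>M borel)" and AD: "A = Psi -` D0 \<inter> space M"
    using A unfolding Phi_def using sets_vimage_algebra2[of Psi "space M" "NN \<Otimes>\<^sub>M borel"]
      measurable_space[OF Psi_meas] by auto
  have "A \<inter> {\<omega>. p i \<omega> < 1/2} = Psi -` D0 \<inter> space M \<inter> {\<omega>. p i \<omega> \<in> {..<1/2}}" unfolding AD by auto
  moreover have "A \<inter> {\<omega>. \<not> p i \<omega> < 1/2} = Psi -` D0 \<inter> space M \<inter> {\<omega>. p i \<omega> \<in> {1/2..}}" unfolding AD by auto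
  moreover have "(\<integral>\<^sup>+v. (\<integral>\<^sup>+t. f t * indicator {t. t \<in> {..<1/2} \<and> gtilde t \<in> Pair v -` D0} t \<partial>lborel) \<partial>distr M NN V)
      \<le> (\<integral>\<^sup>+v. (\<integral>\<^sup>+t. f t * indicator {t. t \<in> {1/2..} \<and> gtilde t \<in> Pair v -` D0} t \<partial>lborel) \<partial>distr M NN V)"
  proof (rule nn_integral_mono)
    fix v
    have E: "Pair v -` D0 \<in> sets borel" using sets_Pair1[OF D0] .
    have "{t. t \<in> {..<1/2} \<and> gtilde t \<in> Pair v -` D0} = {t. t < 1/2 \<and> gtilde t \<in> Pair v -` D0}" by auto
    moreover have "{t. t \<in> {1/2..} \<and> gtilde t \<in> Pair v -` D0} = {t. \<not> t < 1/2 \<and> gtilde t \<in> Pair v -` D0}" by auto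
    ultimately show "(\<integral>\<^sup>+t. f t * indicator {t. t \<in> {..<1/2} \<and> gtilde t \<in> Pair v -` D0} t \<partial>lborel)
      \<le> (\<integral>\<^sup>+t. f t * indicator {t. t \<in> {1/2..} \<and> gtilde t \<in> Pair v -` D0} t \<partial>lborel)"
      using one_dim[OF fm f0 fmono E] by simp
  qed
  ultimately show ?thesis using key_set_eq[OF D0 _ f, of "{..<1/2}"] key_set_eq[OF D0 _ f, of "{1/2..}"] by simp
qed

lemma meas_Phi_M: "g \<in> measurable Phi N \<Longrightarrow> g \<in> measurable M N"
  by (rule measurable_from_subalg[OF Phi_sub])

lemma sets_Phi_M: "A \<in> sets Phi \<Longrightarrow> A \<in> sets M"
  using Phi_sub unfolding subalgebra_def by auto

lemma key_fun:
  fixes W :: "'a \<Rightarrow> ennreal"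
  assumes W: "W \<in> borel_measurable Phi"
  shows "(\<integral>\<^sup>+\<omega>. W \<omega> * indicator {\<omega>. p i \<omega> < 1/2} \<omega> \<partial>M) \<le> (\<integral>\<^sup>+\<omega>. W \<omega> * indicator {\<omega>. \<not> p i \<omega> < 1/2} \<omega> \<partial>M)"
  using W
proof (induction rule: borel_measurable_induct)
  case (cong f g)
  have "(\<integral>\<^sup>+\<omega>. f \<omega> * indicator {\<omega>. p i \<omega> < 1/2} \<omega> \<partial>M) = (\<integral>\<^sup>+\<omega>. g \<omega> * indicator {\<omega>. p i \<omega> < 1/2} \<omega> \<partial>M)"
    using cong(3) by (intro nn_integral_cong) (simp add: space_Phi)
  moreover have "(\<integral>\<^sup>+\<omega>. f \<omega> * indicator {\<omega>. \<not> p i \<omega> < 1/2} \<omega> \<partial>M) = (\<integral>\<^sup>+\<omega>. g \<omega> * indicator {\<omega>. \<not> p i \<omega> < 1/2} \<omega> \<partial>M)"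
    using cong(3) by (intro nn_integral_cong) (simp add: space_Phi)
  ultimately show ?case using cong(4) by simp
next
  case (set A)
  have AM: "A \<in> sets M" by (rule sets_Phi_M[OF set])
  have pim[measurable]: "p i \<in> borel_measurable M" by (rule pm[OF iI])
  have s1: "A \<inter> {\<omega>. p i \<omega> < 1/2} \<in> sets M"
  proof -
    have "A \<inter> {\<omega>. p i \<omega> < 1/2} = A \<inter> {\<omega>\<in>space M. p i \<omega> < 1/2}" using sets.sets_into_space[OF AM] by auto
    then show ?thesis using AM by simp
  qed
  have s2: "A \<inter> {\<omega>. \<not> p i \<omega> < 1/2} \<in> sets M"
  proof -
    have "A \<inter> {\<omega>. \<not> p i \<omega> < 1/2} = A \<inter> {\<omega>\<in>space M. \<not> p i \<omega> < 1/2}" using sets.sets_into_space[OF AM] by auto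
    then show ?thesis using AM by simp
  qed
  have "(\<integral>\<^sup>+\<omega>. indicator A \<omega> * indicator {\<omega>. p i \<omega> < 1/2} \<omega> \<partial>M) = emeasure M (A \<inter> {\<omega>. p i \<omega> < 1/2})"
    using s1 by (simp add: indicator_inter_arith[symmetric])
  moreover have "(\<integral>\<^sup>+\<omega>. indicator A \<omega> * indicator {\<omega>. \<not> p i \<omega> < 1/2} \<omega> \<partial>M) = emeasure M (A \<inter> {\<omega>. \<not> p i \<omega> < 1/2})"
    using s2 by (simp add: indicator_inter_arith[symmetric])
  ultimately show ?case using key_set[OF set] by simp
next
  case (mult u c)
  have um: "u \<in> borel_measurable M" using mult by (auto intro: meas_Phi_M)
  have pim[measurable]: "p i \<in> borel_measurable M" by (rule pm[OF iI])
  have "(\<integral>\<^sup>+\<omega>. c * u \<omega> * indicator {\<omega>. p i \<omega> < 1/2} \<omega> \<partial>M) = c * (\<integral>\<^sup>+\<omega>. u \<omega> * indicator {\<omega>. p i \<omega> < 1/2} \<omega> \<partial>M)"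
    using um by (subst nn_integral_cmult[symmetric]) (auto simp: mult.assoc)
  moreover have "(\<integral>\<^sup>+\<omega>. c * u \<omega> * indicator {\<omega>. \<not> p i \<omega> < 1/2} \<omega> \<partial>M) = c * (\<integral>\<^sup>+\<omega>. u \<omega> * indicator {\<omega>. \<not> p i \<omega> < 1/2} \<omega> \<partial>M)"
    using um by (subst nn_integral_cmult[symmetric]) (auto simp: mult.assoc)
  moreover have "(\<integral>\<^sup>+\<omega>. u \<omega> * indicator {\<omega>. p i \<omega> < 1/2} \<omega> \<partial>M) \<le> (\<integral>\<^sup>+\<omega>. u \<omega> * indicator {\<omega>. \<not> p i \<omega> < 1/2} \<omega> \<partial>M)"
    using mult by blast
  ultimately show ?case by (simp add: mult_left_mono)
next
  case (add u v)
  have um: "u \<in> borel_measurable M" using add by (auto intro: meas_Phi_M)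
  have vm: "v \<in> borel_measurable M" using add by (auto intro: meas_Phi_M)
  have Pu: "(\<integral>\<^sup>+\<omega>. u \<omega> * indicator {\<omega>. p i \<omega> < 1/2} \<omega> \<partial>M) \<le> (\<integral>\<^sup>+\<omega>. u \<omega> * indicator {\<omega>. \<not> p i \<omega> < 1/2} \<omega> \<partial>M)"
    using add by blast
  have Pv: "(\<integral>\<^sup>+\<omega>. v \<omega> * indicator {\<omega>. p i \<omega> < 1/2} \<omega> \<partial>M) \<le> (\<integral>\<^sup>+\<omega>. v \<omega> * indicator {\<omega>. \<not> p i \<omega> < 1/2} \<omega> \<partial>M)"
    using add by blast
  have pim[measurable]: "p i \<in> borel_measurable M" by (rule pm[OF iI])
  have "(\<integral>\<^sup>+\<omega>. (v \<omega> + u \<omega>) * indicator {\<omega>. p i \<omega> < 1/2} \<omega> \<partial>M)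
      = (\<integral>\<^sup>+\<omega>. v \<omega> * indicator {\<omega>. p i \<omega> < 1/2} \<omega> \<partial>M) + (\<integral>\<^sup>+\<omega>. u \<omega> * indicator {\<omega>. p i \<omega> < 1/2} \<omega> \<partial>M)"
    using um vm by (subst nn_integral_add[symmetric]) (auto simp: distrib_right)
  moreover have "(\<integral>\<^sup>+\<omega>. (v \<omega> + u \<omega>) * indicator {\<omega>. \<not> p i \<omega> < 1/2} \<omega> \<partial>M)
      = (\<integral>\<^sup>+\<omega>. v \<omega> * indicator {\<omega>. \<not> p i \<omega> < 1/2} \<omega> \<partial>M) + (\<integral>\<^sup>+\<omega>. u \<omega> * indicator {\<omega>. \<not> p i \<omega> < 1/2} \<omega> \<partial>M)"
    using um vm by (subst nn_integral_add[symmetric]) (auto simp: distrib_right)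
  ultimately show ?case using Pu Pv by (simp add: add_mono)
next
  case (seq U)
  have Um: "\<And>k. U k \<in> borel_measurable M" using seq by (auto intro: meas_Phi_M)
  have incU: "incseq U" using seq by blast
  have pim[measurable]: "p i \<in> borel_measurable M" by (rule pm[OF iI])
  have inc1: "incseq (\<lambda>k \<omega>. U k \<omega> * indicator {\<omega>. p i \<omega> < 1/2} \<omega>)"
    using incU by (auto simp: incseq_def le_fun_def intro: mult_right_mono)
  have inc2: "incseq (\<lambda>k \<omega>. U k \<omega> * indicator {\<omega>. \<not> p i \<omega> < 1/2} \<omega>)"
    using incU by (auto simp: incseq_def le_fun_def intro: mult_right_mono)
  have "(\<integral>\<^sup>+\<omega>. (SUP k. U k) \<omega> * indicator {\<omega>. p i \<omega> < 1/2} \<omega> \<partial>M)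
      = (\<integral>\<^sup>+\<omega>. (SUP k. U k \<omega> * indicator {\<omega>. p i \<omega> < 1/2} \<omega>) \<partial>M)"
    by (simp add: SUP_mult_right_ennreal image_image)
  also have "\<dots> = (SUP k. \<integral>\<^sup>+\<omega>. U k \<omega> * indicator {\<omega>. p i \<omega> < 1/2} \<omega> \<partial>M)"
    using Um by (intro nn_integral_monotone_convergence_SUP[OF inc1]) auto
  also have "\<dots> \<le> (SUP k. \<integral>\<^sup>+\<omega>. U k \<omega> * indicator {\<omega>. \<not> p i \<omega> < 1/2} \<omega> \<partial>M)"
    using seq by (intro SUP_mono) blast
  also have "\<dots> = (\<integral>\<^sup>+\<omega>. (SUP k. U k \<omega> * indicator {\<omega>. \<not> p i \<omega> < 1/2} \<omega>) \<partial>M)"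
    using Um by (intro nn_integral_monotone_convergence_SUP[OF inc2, symmetric]) auto
  also have "\<dots> = (\<integral>\<^sup>+\<omega>. (SUP k. U k) \<omega> * indicator {\<omega>. \<not> p i \<omega> < 1/2} \<omega> \<partial>M)"
    by (simp add: SUP_mult_right_ennreal image_image)
  finally show ?case .
qed

end

lemma h_meas[measurable]: "h \<in> borel_measurable borel"
  unfolding h_def by measurable

lemma h_vals: "h t = 1 \<longleftrightarrow> t < 1/2" "h t = -1 \<longleftrightarrow> \<not> t < 1/2" "h t \<noteq> 0"
  unfolding h_def by auto

lemma preimgs_Pow: "preimgs \<Omega> f N \<subseteq> Pow \<Omega>" unfolding preimgs_def by auto

lemma meas_trans:
  assumes "space N1 = space N2" "sets N1 \<subseteq> sets N2" "f \<in> measurable N1 Y"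
  shows "f \<in> measurable N2 Y"
  using assms by (intro measurable_from_subalg[of N2 N1]) (auto simp: subalgebra_def)

lemma meas_gen:
  assumes "G \<subseteq> Pow \<Omega>" "preimgs \<Omega> f Y \<subseteq> G" "f \<in> \<Omega> \<rightarrow> space Y"
  shows "f \<in> measurable (sigma \<Omega> G) Y"
proof (rule measurableI)
  fix \<omega> assume "\<omega> \<in> space (sigma \<Omega> G)" then show "f \<omega> \<in> space Y" using assms by (auto simp: space_measure_of_conv)
next
  fix A assume "A \<in> sets Y"
  then have "f -` A \<inter> \<Omega> \<in> G" using assms(2) unfolding preimgs_def by auto
  then show "f -` A \<inter> space (sigma \<Omega> G) \<in> sets (sigma \<Omega> G)" using assms(1)
    by (simp add: space_measure_of_conv sets_measure_of sigma_sets.Basic)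
qed

lemma sets_sigma_sub:
  assumes "G \<subseteq> Pow (space N)" "G \<subseteq> sets N"
  shows "sets (sigma (space N) G) \<subseteq> sets N"
  using assms by (simp add: sets_measure_of sets.sigma_sets_subset)

lemma preimgs_sub_sets:
  assumes "f \<in> measurable N Y"
  shows "preimgs (space N) f Y \<subseteq> sets N"
  using assms unfolding preimgs_def by (auto intro: measurable_sets)

context
  fixes M :: "'a measure" and X :: "'x measure" and x :: "nat \<Rightarrow> 'a \<Rightarrow> 'x" and p :: "nat \<Rightarrow> 'a \<Rightarrow> real"
begin

definition Gon :: "nat \<Rightarrow> 'a set set" where
  "Gon t = (\<Union>i\<in>{1..t}. preimgs (space M) (x i) X \<union> preimgs (space M) (\<lambda>\<omega>. gtilde (p i \<omega>)) borel)
      \<union> (\<Union>i\<in>{1..<t}. preimgs (space M) (p i) borel)"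

lemma F_online_eq: "F_online M X x p t = sigma (space M) (Gon t)"
  unfolding F_online_def Gon_def ..

lemma Gon_Pow: "Gon t \<subseteq> Pow (space M)"
  unfolding Gon_def preimgs_def by auto

lemma space_F_online: "space (F_online M X x p t) = space M"
  unfolding F_online_eq using Gon_Pow by (simp add: space_measure_of_conv)

lemma sets_F_online: "sets (F_online M X x p t) = sigma_sets (space M) (Gon t)"
  unfolding F_online_eq using Gon_Pow by (simp add: sets_measure_of)

lemma F_online_mono: "s \<le> t \<Longrightarrow> sets (F_online M X x p s) \<subseteq> sets (F_online M X x p t)"
  unfolding sets_F_online by (intro sigma_sets_mono') (auto simp: Gon_def)

lemma F_online_p: "1 \<le> j \<Longrightarrow> j < t \<Longrightarrow> p j \<in> borel_measurable (F_online M X x p t)"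
  unfolding F_online_eq by (rule meas_gen[OF Gon_Pow]) (auto simp: Gon_def)

end

lemma online_ok:
  fixes M :: "'a measure" and X :: "'x measure"
  assumes PS: "prob_space M" and a: "0 < \<alpha>" "\<alpha> < 1"
    and u: "(\<exists>m>0. u = u_lin m \<alpha>) \<or> u = u_curved \<alpha>"
    and hyps: "pvalue_hyps M X {1..} x p" and strat: "online_strategy M X x p d"
  shows "measure M {\<omega> \<in> space M. online_reject u p d \<omega>} \<le> \<alpha>"
proof -
  interpret prob_space M by (rule PS)
  define \<xi> where "\<xi> t \<omega> = (if d t \<omega> then h (p t \<omega>) else 0)" for t \<omega>
  define F where "F k = F_online M X x p (Suc k)" for k
  have dm: "\<And>t. 1 \<le> t \<Longrightarrow> d t \<in> measurable (F_online M X x p t) (count_space UNIV)"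
    using strat unfolding online_strategy_def by auto
  have xm: "\<And>j. j \<in> {1..} \<Longrightarrow> x j \<in> measurable M X" using hyps unfolding pvalue_hyps_def by auto
  have pm: "\<And>j. j \<in> {1..} \<Longrightarrow> p j \<in> borel_measurable M"
    using hyps unfolding pvalue_hyps_def indep_vars_def2 by auto
  have Gsets: "Gon M X x p t \<subseteq> sets M" for t
  proof -
    have "preimgs (space M) (\<lambda>\<omega>. gtilde (p i \<omega>)) borel \<subseteq> sets M" if "i \<ge> 1" for i
      using that by (intro preimgs_sub_sets measurable_compose[OF pm gtilde_meas]) auto
    moreover have "preimgs (space M) (x i) X \<subseteq> sets M" if "i \<ge> 1" for i
      using that by (intro preimgs_sub_sets xm) auto
    moreover have "preimgs (space M) (p i) borel \<subseteq> sets M" if "i \<ge> 1" for i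
      using that by (intro preimgs_sub_sets pm) auto
    ultimately show ?thesis unfolding Gon_def by (intro Un_least UN_least) auto
  qed
  have subF: "subalgebra M (F k)" for k
    unfolding subalgebra_def F_def using space_F_online sets_F_online Gsets Gon_Pow
    by (metis sets.sigma_sets_subset)
  have dF: "1 \<le> j \<Longrightarrow> j \<le> Suc k \<Longrightarrow> d j \<in> measurable (F_online M X x p (Suc k)) (count_space UNIV)" for j k
    by (rule meas_trans[OF _ F_online_mono dm]) (auto simp: space_F_online)
  have meas: "\<xi> j \<in> borel_measurable (F k)" if "1 \<le> j" "j \<le> k" for j k
  proof -
    have "p j \<in> borel_measurable (F k)" unfolding F_def using that by (intro F_online_p) auto
    moreover have "Measurable.pred (F k) (d j)" unfolding F_def using that by (intro dF) auto
    ultimately show ?thesis unfolding \<xi>_def by measurable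
  qed
  have vals: "\<xi> j \<omega> \<in> {-1, 0, 1}" for j \<omega> unfolding \<xi>_def h_def by auto
  have key: "(\<integral>\<^sup>+\<omega>. W \<omega> * indicator {\<omega>. \<xi> k \<omega> = 1} \<omega> \<partial>M) \<le> (\<integral>\<^sup>+\<omega>. W \<omega> * indicator {\<omega>. \<xi> k \<omega> = -1} \<omega> \<partial>M)"
    if k: "1 \<le> k" and W: "W \<in> borel_measurable (F (k-1))" for k and W :: "'a \<Rightarrow> ennreal"
  proof -
    interpret pv_setting M X "{1..}" x p k using hyps k by unfold_locales auto
    have FK: "F (k-1) = F_online M X x p k" unfolding F_def using k by simp
    have sub: "sets (F_online M X x p k) \<subseteq> sets Phi"
    proof -
      have "Gon M X x p k \<subseteq> sets Phi"
      proof -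
        have "preimgs (space M) (\<lambda>\<omega>. gtilde (p i \<omega>)) borel \<subseteq> sets Phi" if "i \<ge> 1" for i
          using that preimgs_sub_sets[OF Phi_g[of i]] unfolding space_Phi by simp
        moreover have "preimgs (space M) (x i) X \<subseteq> sets Phi" if "i \<ge> 1" for i
          using that preimgs_sub_sets[OF Phi_x[of i]] unfolding space_Phi by simp
        moreover have "preimgs (space M) (p i) borel \<subseteq> sets Phi" if "i \<ge> 1" "i < k" for i
          using that preimgs_sub_sets[OF Phi_p[of i]] unfolding space_Phi by simp
        ultimately show ?thesis unfolding Gon_def by (intro Un_least UN_least) auto
      qed
      then show ?thesis unfolding sets_F_online using Gon_Pow
        by (metis sets.sigma_sets_subset space_Phi)
    qed
    have dk: "Measurable.pred (F_online M X x p k) (d k)" using dm k by simp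
    have W': "(\<lambda>\<omega>. W \<omega> * indicator {\<omega>. d k \<omega>} \<omega>) \<in> borel_measurable (F_online M X x p k)"
      using W dk unfolding FK by measurable
    have W'Phi: "(\<lambda>\<omega>. W \<omega> * indicator {\<omega>. d k \<omega>} \<omega>) \<in> borel_measurable Phi"
      by (rule meas_trans[OF _ sub W']) (unfold space_F_online space_Phi, rule refl)
    have "(\<integral>\<^sup>+\<omega>. W \<omega> * indicator {\<omega>. \<xi> k \<omega> = 1} \<omega> \<partial>M)
        = (\<integral>\<^sup>+\<omega>. (W \<omega> * indicator {\<omega>. d k \<omega>} \<omega>) * indicator {\<omega>. p k \<omega> < 1/2} \<omega> \<partial>M)"
      by (intro nn_integral_cong) (auto simp: \<xi>_def h_vals indicator_def)
    also have "\<dots> \<le> (\<integral>\<^sup>+\<omega>. (W \<omega> * indicator {\<omega>. d k \<omega>} \<omega>) * indicator {\<omega>. \<not> p k \<omega> < 1/2} \<omega> \<partial>M)"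
      by (rule key_fun[OF W'Phi])
    also have "\<dots> = (\<integral>\<^sup>+\<omega>. W \<omega> * indicator {\<omega>. \<xi> k \<omega> = -1} \<omega> \<partial>M)"
      by (intro nn_integral_cong) (auto simp: \<xi>_def h_vals indicator_def)
    finally show ?thesis .
  qed
  interpret VV: ville M F \<xi>
    by unfold_locales (use subF meas vals key in auto)
  have "{\<omega> \<in> space M. online_reject u p d \<omega>} = {\<omega>\<in>space M. \<exists>k\<ge>1. 1 \<le> VV.Cn k \<omega> \<and> VV.S k \<omega> > u (VV.Cn k \<omega>)}"
  proof -
    have Cn: "VV.Cn t \<omega> = card (selected d t \<omega>)" for t \<omega>
      unfolding VV.Cn_def selected_def \<xi>_def using h_vals(3) by (metis (mono_tags))
    have S: "VV.S t \<omega> = (\<Sum>i\<in>selected d t \<omega>. h (p i \<omega>))" for t \<omega>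
      unfolding VV.S_def selected_def \<xi>_def by (rule sum.inter_filter[symmetric]) simp
    show ?thesis unfolding online_reject_def Cn S by auto
  qed
  then show ?thesis using VV.bound_u_all[OF a u] by simp
qed

locale batch_setting = prob_space M for M :: "'a measure" +
  fixes X :: "'x measure" and n :: nat and x :: "nat \<Rightarrow> 'a \<Rightarrow> 'x" and p :: "nat \<Rightarrow> 'a \<Rightarrow> real"
    and istar :: "nat \<Rightarrow> 'a \<Rightarrow> nat"
  assumes hyps: "pvalue_hyps M X {1..n} x p" and strat: "batch_strategy M X n x p istar"
begin

abbreviation "Mk k \<omega> \<equiv> revealed istar k \<omega>"
abbreviation "FB k \<equiv> F_batch M X n x p istar k"

definition Gb :: "nat \<Rightarrow> 'a set set" where
  "Gb k = (\<Union>i\<in>{1..n}. preimgs (space M) (x i) X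
               \<union> preimgs (space M) (\<lambda>\<omega>. gtilde (p i \<omega>)) borel
               \<union> preimgs (space M) (\<lambda>\<omega>. i \<in> Mk k \<omega>) (count_space UNIV)
               \<union> preimgs (space M) (\<lambda>\<omega>. if i \<in> Mk k \<omega> then p i \<omega> else 0) borel)"

lemma FB_eq: "FB k = sigma (space M) (Gb k)" unfolding F_batch_def Gb_def ..
lemma Gb_Pow: "Gb k \<subseteq> Pow (space M)" unfolding Gb_def preimgs_def by auto
lemma space_FB: "space (FB k) = space M" unfolding FB_eq using Gb_Pow by (simp add: space_measure_of_conv)
lemma sets_FB: "sets (FB k) = sigma_sets (space M) (Gb k)" unfolding FB_eq using Gb_Pow by (simp add: sets_measure_of)

lemma xm: "i \<in> {1..n} \<Longrightarrow> x i \<in> measurable M X" using hyps unfolding pvalue_hyps_def by auto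
lemma pm: "i \<in> {1..n} \<Longrightarrow> p i \<in> borel_measurable M"
  using hyps unfolding pvalue_hyps_def indep_vars_def2 by auto

lemma istar_meas: "k \<in> {1..n} \<Longrightarrow> istar k \<in> measurable (FB (k-1)) (count_space UNIV)"
  using strat unfolding batch_strategy_def by auto
lemma istar_range: "k \<in> {1..n} \<Longrightarrow> \<omega> \<in> space M \<Longrightarrow> istar k \<omega> \<in> {1..n} - Mk (k-1) \<omega>"
  using strat unfolding batch_strategy_def by auto

lemma Mk_Suc: "Mk (Suc m) \<omega> = insert (istar (Suc m) \<omega>) (Mk m \<omega>)"
proof -
  have "{1..Suc m} = insert (Suc m) {1..m}" by auto
  then show ?thesis unfolding revealed_def by simp
qed
lemma Mk_0: "Mk 0 \<omega> = {}" unfolding revealed_def by auto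
lemma Mk_mono: "m \<le> L \<Longrightarrow> Mk m \<omega> \<subseteq> Mk L \<omega>" unfolding revealed_def by auto

lemma Mk_pred:
  assumes "\<And>j. j \<in> {1..m} \<Longrightarrow> istar j \<in> measurable N (count_space UNIV)"
  shows "Measurable.pred N (\<lambda>\<omega>. i \<in> Mk m \<omega>)"
proof -
  have "{\<omega>\<in>space N. i \<in> Mk m \<omega>} = (\<Union>j\<in>{1..m}. istar j -` {i} \<inter> space N)"
    unfolding revealed_def by auto
  also have "\<dots> \<in> sets N" using assms by (intro sets.finite_UN measurable_sets) auto
  finally show ?thesis unfolding pred_def .
qed

lemma preimgs_FB: "f \<in> measurable (FB L) Y \<Longrightarrow> preimgs (space M) f Y \<subseteq> sets (FB L)"
  using preimgs_sub_sets[of f "FB L" Y] by (simp add: space_FB)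

lemma sigma_FB_sub: "G \<subseteq> sets N \<Longrightarrow> space N = space M \<Longrightarrow> sigma_sets (space M) G \<subseteq> sets N"
  using sets.sigma_sets_subset[of G N] by simp

lemma gen_meas_FB: "f \<in> measurable (FB L) Y" if "preimgs (space M) f Y \<subseteq> Gb L" "f \<in> space M \<rightarrow> space Y"
  unfolding FB_eq by (rule meas_gen[OF Gb_Pow that])

lemma q_meas: "i \<in> {1..n} \<Longrightarrow> (\<lambda>\<omega>. if i \<in> Mk L \<omega> then p i \<omega> else 0) \<in> borel_measurable (FB L)"
  by (rule gen_meas_FB) (auto simp: Gb_def)

lemma x_meas_FB: "i \<in> {1..n} \<Longrightarrow> x i \<in> measurable (FB L) X"
  by (rule gen_meas_FB) (auto simp: Gb_def intro!: measurable_space[OF xm])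

lemma g_meas_FB: "i \<in> {1..n} \<Longrightarrow> (\<lambda>\<omega>. gtilde (p i \<omega>)) \<in> borel_measurable (FB L)"
  by (rule gen_meas_FB) (auto simp: Gb_def)

lemma FB_mono_aux:
  assumes ist: "\<And>j. j \<in> {1..m} \<Longrightarrow> istar j \<in> measurable (FB L) (count_space UNIV)" and mL: "m \<le> L"
  shows "sets (FB m) \<subseteq> sets (FB L)"
proof -
  have "Gb m \<subseteq> sets (FB L)"
  proof (unfold Gb_def, intro UN_least Un_least)
    fix i assume i: "i \<in> {1..n}"
    show "preimgs (space M) (x i) X \<subseteq> sets (FB L)"
      using preimgs_FB[OF x_meas_FB[OF i, of L]] .
    show "preimgs (space M) (\<lambda>\<omega>. gtilde (p i \<omega>)) borel \<subseteq> sets (FB L)"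
      using preimgs_FB[OF g_meas_FB[OF i, of L]] .
    have pr: "Measurable.pred (FB L) (\<lambda>\<omega>. i \<in> Mk m \<omega>)" by (rule Mk_pred[OF ist])
    show "preimgs (space M) (\<lambda>\<omega>. i \<in> Mk m \<omega>) (count_space UNIV) \<subseteq> sets (FB L)"
      using preimgs_FB[OF pr] .
    have "(\<lambda>\<omega>. if i \<in> Mk m \<omega> then (if i \<in> Mk L \<omega> then p i \<omega> else 0) else 0) \<in> borel_measurable (FB L)"
      using pr q_meas[OF i, of L] by measurable
    moreover have "(\<lambda>\<omega>. if i \<in> Mk m \<omega> then (if i \<in> Mk L \<omega> then p i \<omega> else 0) else 0) = (\<lambda>\<omega>. if i \<in> Mk m \<omega> then p i \<omega> else 0)"
      using Mk_mono[OF mL] by (auto simp: fun_eq_iff)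
    ultimately show "preimgs (space M) (\<lambda>\<omega>. if i \<in> Mk m \<omega> then p i \<omega> else 0) borel \<subseteq> sets (FB L)"
      by (intro preimgs_FB) simp
  qed
  then show ?thesis unfolding sets_FB[of m] by (rule sigma_FB_sub) (simp add: space_FB)
qed

lemma istar_FB: "m \<le> L \<Longrightarrow> L \<le> n \<Longrightarrow> (\<forall>j\<in>{1..m}. istar j \<in> measurable (FB L) (count_space UNIV))"
proof (induction m)
  case 0 then show ?case by simp
next
  case (Suc m)
  then have IH: "\<And>j. j \<in> {1..m} \<Longrightarrow> istar j \<in> measurable (FB L) (count_space UNIV)" by auto
  have sub: "sets (FB m) \<subseteq> sets (FB L)" using FB_mono_aux[OF IH] Suc by simp
  have im: "istar (Suc m) \<in> measurable (FB m) (count_space UNIV)"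
    using istar_meas[of "Suc m"] Suc by simp
  have sp: "space (FB m) = space (FB L)" by (simp only: space_FB)
  have "istar (Suc m) \<in> measurable (FB L) (count_space UNIV)"
    by (rule meas_trans[OF sp sub im])
  then show ?case using IH by (auto simp: le_Suc_eq)
qed

lemma FB_mono: "m \<le> L \<Longrightarrow> L \<le> n \<Longrightarrow> sets (FB m) \<subseteq> sets (FB L)"
  using FB_mono_aux istar_FB by blast

lemma FB_sub: "L \<le> n \<Longrightarrow> sets (FB L) \<subseteq> sets M"
proof (induction L rule: less_induct)
  case (less L)
  have "Gb L \<subseteq> sets M"
  proof (unfold Gb_def, intro UN_least Un_least)
    fix i assume i: "i \<in> {1..n}"
    show "preimgs (space M) (x i) X \<subseteq> sets M" using preimgs_sub_sets[OF xm[OF i]] .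
    show "preimgs (space M) (\<lambda>\<omega>. gtilde (p i \<omega>)) borel \<subseteq> sets M"
      using preimgs_sub_sets[OF measurable_compose[OF pm[OF i] gtilde_meas]] .
    have ist: "istar j \<in> measurable M (count_space UNIV)" if j: "j \<in> {1..L}" for j
    proof -
      have "istar j \<in> measurable (FB (j - 1)) (count_space UNIV)" using istar_meas[of j] j less.prems by auto
      moreover have "sets (FB (j-1)) \<subseteq> sets M" by (rule less.IH) (use j less.prems in auto)
      moreover have "space (FB (j-1)) = space M" by (simp only: space_FB)
      ultimately show "istar j \<in> measurable M (count_space UNIV)"
        using meas_trans by blast
    qed
    have pr: "Measurable.pred M (\<lambda>\<omega>. i \<in> Mk L \<omega>)" by (rule Mk_pred[OF ist])
    show "preimgs (space M) (\<lambda>\<omega>. i \<in> Mk L \<omega>) (count_space UNIV) \<subseteq> sets M"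
      using preimgs_sub_sets[OF pr] .
    have "(\<lambda>\<omega>. if i \<in> Mk L \<omega> then p i \<omega> else 0) \<in> borel_measurable M"
      using pr pm[OF i] by measurable
    then show "preimgs (space M) (\<lambda>\<omega>. if i \<in> Mk L \<omega> then p i \<omega> else 0) borel \<subseteq> sets M"
      by (rule preimgs_sub_sets)
  qed
  then show ?case unfolding sets_FB by (rule sigma_FB_sub) simp
qed

abbreviation "PhiI i \<equiv> pv_setting.Phi M X {1..n} x p i"
definition Ei :: "nat \<Rightarrow> nat \<Rightarrow> 'a set" where "Ei i m = {\<omega>\<in>space M. i \<notin> Mk m \<omega>}"

lemma pvs: "i \<in> {1..n} \<Longrightarrow> pv_setting M X {1..n} x p i"
  using hyps by unfold_locales auto

lemma C_step:
  assumes i: "i \<in> {1..n}" and HE: "Ei i m \<in> sets (PhiI i)"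
    and HJ: "\<And>j. {\<omega>\<in>space M. j \<in> Mk m \<omega>} \<inter> Ei i m \<in> sets (PhiI i)"
  shows "A \<in> sets (FB m) \<Longrightarrow> A \<inter> Ei i m \<in> sets (PhiI i)"
proof -
  interpret P: pv_setting M X "{1..n}" x p i by (rule pvs[OF i])
  let ?E = "Ei i m"
  have Esub: "?E \<subseteq> space M" unfolding Ei_def by auto
  assume "A \<in> sets (FB m)"
  then have "A \<in> sigma_sets (space M) (Gb m)" unfolding sets_FB .
  then show "A \<inter> ?E \<in> sets P.Phi"
  proof (induction rule: sigma_sets.induct)
    case (Basic a)
    then obtain j where j: "j \<in> {1..n}" and
      a: "a \<in> preimgs (space M) (x j) X \<or> a \<in> preimgs (space M) (\<lambda>\<omega>. gtilde (p j \<omega>)) borel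
          \<or> a \<in> preimgs (space M) (\<lambda>\<omega>. j \<in> Mk m \<omega>) (count_space UNIV)
          \<or> a \<in> preimgs (space M) (\<lambda>\<omega>. if j \<in> Mk m \<omega> then p j \<omega> else 0) borel"
      unfolding Gb_def by blast
    have HJ': "{\<omega>\<in>space M. j \<in> Mk m \<omega>} \<inter> ?E \<in> sets P.Phi" by (rule HJ)
    have HJ'': "?E - {\<omega>\<in>space M. j \<in> Mk m \<omega>} \<inter> ?E \<in> sets P.Phi" using HE HJ' by auto
    consider (x) "a \<in> preimgs (space M) (x j) X" | (g) "a \<in> preimgs (space M) (\<lambda>\<omega>. gtilde (p j \<omega>)) borel"
      | (ind) "a \<in> preimgs (space M) (\<lambda>\<omega>. j \<in> Mk m \<omega>) (count_space UNIV)"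
      | (q) "a \<in> preimgs (space M) (\<lambda>\<omega>. if j \<in> Mk m \<omega> then p j \<omega> else 0) borel" using a by blast
    then show ?case
    proof cases
      case x
      then have "a \<in> sets P.Phi" using preimgs_sub_sets[OF P.Phi_x[OF j]] unfolding P.space_Phi by blast
      then show ?thesis using HE by auto
    next
      case g
      then have "a \<in> sets P.Phi" using preimgs_sub_sets[OF P.Phi_g[OF j]] unfolding P.space_Phi by blast
      then show ?thesis using HE by auto
    next
      case ind
      then obtain B where a: "a = (\<lambda>\<omega>. j \<in> Mk m \<omega>) -` B \<inter> space M" unfolding preimgs_def by auto
      have "a \<inter> ?E = (if True \<in> B then {\<omega>\<in>space M. j \<in> Mk m \<omega>} \<inter> ?E else {})
          \<union> (if False \<in> B then ?E - {\<omega>\<in>space M. j \<in> Mk m \<omega>} \<inter> ?E else {})"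
      proof (rule set_eqI)
        fix \<omega> show "\<omega> \<in> a \<inter> ?E \<longleftrightarrow> \<omega> \<in> (if True \<in> B then {\<omega>\<in>space M. j \<in> Mk m \<omega>} \<inter> ?E else {})
          \<union> (if False \<in> B then ?E - {\<omega>\<in>space M. j \<in> Mk m \<omega>} \<inter> ?E else {})"
          by (cases "j \<in> Mk m \<omega>"; cases "True \<in> B"; cases "False \<in> B") (simp_all add: a Ei_def)
      qed
      then show ?thesis using HJ' HJ'' HE by auto
    next
      case q
      then obtain B where a: "a = (\<lambda>\<omega>. if j \<in> Mk m \<omega> then p j \<omega> else 0) -` B \<inter> space M"
        and B: "B \<in> sets borel" unfolding preimgs_def by auto
      show ?thesis
      proof (cases "j = i")
        case True
        have "a \<inter> ?E = (if (0::real) \<in> B then ?E else {})" unfolding a True Ei_def by auto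
        then show ?thesis using HE by auto
      next
        case False
        have pj: "p j -` B \<inter> space M \<in> sets P.Phi"
          using measurable_sets[OF P.Phi_p[OF j False] B] unfolding P.space_Phi .
        have "a \<inter> ?E = ({\<omega>\<in>space M. j \<in> Mk m \<omega>} \<inter> ?E \<inter> (p j -` B \<inter> space M))
            \<union> (if (0::real) \<in> B then ?E - {\<omega>\<in>space M. j \<in> Mk m \<omega>} \<inter> ?E else {})"
          unfolding a using Esub by (auto split: if_splits)
        then show ?thesis using HJ' HJ'' pj by auto
      qed
    qed
  next
    case Empty then show ?case by simp
  next
    case (Compl a)
    have "(space M - a) \<inter> ?E = ?E - (a \<inter> ?E)" using Esub by auto
    then show ?case using Compl HE by auto
  next
    case (Union a)
    have "(\<Union>k. a k) \<inter> ?E = (\<Union>k. a k \<inter> ?E)" by auto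
    moreover have "(\<Union>k. a k \<inter> ?E) \<in> sets P.Phi" using Union by (intro sets.countable_UN) auto
    ultimately show ?case by simp
  qed
qed

lemma Inv:
  assumes i: "i \<in> {1..n}"
  shows "m \<le> n \<Longrightarrow> Ei i m \<in> sets (PhiI i) \<and> (\<forall>j. {\<omega>\<in>space M. j \<in> Mk m \<omega>} \<inter> Ei i m \<in> sets (PhiI i))"
proof (induction m)
  case 0
  interpret P: pv_setting M X "{1..n}" x p i by (rule pvs[OF i])
  have "Ei i 0 = space P.Phi" unfolding Ei_def P.space_Phi by (simp add: Mk_0)
  then show ?case by (simp add: Mk_0)
next
  case (Suc m)
  interpret P: pv_setting M X "{1..n}" x p i by (rule pvs[OF i])
  have IH: "Ei i m \<in> sets P.Phi" "\<And>j. {\<omega>\<in>space M. j \<in> Mk m \<omega>} \<inter> Ei i m \<in> sets P.Phi"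
    using Suc by auto
  have im: "istar (Suc m) \<in> measurable (FB m) (count_space UNIV)" using istar_meas[of "Suc m"] Suc.prems by simp
  have T: "{\<omega>\<in>space M. istar (Suc m) \<omega> = j} \<inter> Ei i m \<in> sets P.Phi" for j
  proof -
    have "{\<omega>\<in>space M. istar (Suc m) \<omega> = j} = istar (Suc m) -` {j} \<inter> space (FB m)" by (auto simp: space_FB)
    also have "\<dots> \<in> sets (FB m)" by (rule measurable_sets[OF im]) simp
    finally show ?thesis by (rule C_step[OF i IH])
  qed
  have E1: "Ei i (Suc m) = Ei i m - {\<omega>\<in>space M. istar (Suc m) \<omega> = i} \<inter> Ei i m"
    unfolding Ei_def Mk_Suc by auto
  have "Ei i (Suc m) \<in> sets P.Phi" unfolding E1 using IH T by auto
  moreover have "{\<omega>\<in>space M. j \<in> Mk (Suc m) \<omega>} \<inter> Ei i (Suc m) \<in> sets P.Phi" for j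
  proof -
    have "{\<omega>\<in>space M. j \<in> Mk (Suc m) \<omega>} \<inter> Ei i (Suc m)
      = (({\<omega>\<in>space M. j \<in> Mk m \<omega>} \<inter> Ei i m) \<union> ({\<omega>\<in>space M. istar (Suc m) \<omega> = j} \<inter> Ei i m)) \<inter> Ei i (Suc m)"
      unfolding Mk_Suc E1 by (auto simp: Ei_def Mk_Suc)
    then show ?thesis using IH T \<open>Ei i (Suc m) \<in> sets P.Phi\<close> by auto
  qed
  ultimately show ?case by auto
qed

lemma gen_E:
  fixes f :: "'a \<Rightarrow> ennreal"
  assumes f: "f \<in> borel_measurable F" and sF: "space F = space G" and E: "E \<in> sets G"
    and tr: "\<And>A. A \<in> sets F \<Longrightarrow> A \<inter> E \<in> sets G"
  shows "(\<lambda>\<omega>. if \<omega> \<in> E then f \<omega> else 0) \<in> borel_measurable G"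
proof (rule measurableI)
  fix B :: "ennreal set" assume B: "B \<in> sets borel"
  have Esub: "E \<subseteq> space G" using sets.sets_into_space[OF E] .
  have "(\<lambda>\<omega>. if \<omega> \<in> E then f \<omega> else 0) -` B \<inter> space G
      = ((f -` B \<inter> space F) \<inter> E) \<union> (if 0 \<in> B then space G - E else {})"
    using Esub sF by (auto split: if_splits)
  also have "\<dots> \<in> sets G" using tr[OF measurable_sets[OF f B]] E by auto
  finally show "(\<lambda>\<omega>. if \<omega> \<in> E then f \<omega> else 0) -` B \<inter> space G \<in> sets G" .
qed simp

lemma W_Phi:
  fixes W :: "'a \<Rightarrow> ennreal"
  assumes i: "i \<in> {1..n}" and k: "k \<in> {1..n}" and W: "W \<in> borel_measurable (FB (k-1))"
  shows "(\<lambda>\<omega>. W \<omega> * indicator {\<omega>. istar k \<omega> = i} \<omega>) \<in> borel_measurable (PhiI i)"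
proof -
  interpret P: pv_setting M X "{1..n}" x p i by (rule pvs[OF i])
  have inv: "Ei i (k-1) \<in> sets P.Phi" "\<And>j. {\<omega>\<in>space M. j \<in> Mk (k-1) \<omega>} \<inter> Ei i (k-1) \<in> sets P.Phi"
    using Inv[OF i, of "k-1"] k by auto
  have im: "istar k \<in> measurable (FB (k-1)) (count_space UNIV)" using istar_meas[OF k] .
  have Wk: "(\<lambda>\<omega>. W \<omega> * indicator {\<omega>. istar k \<omega> = i} \<omega>) \<in> borel_measurable (FB (k-1))"
    using W im by measurable
  have g: "(\<lambda>\<omega>. if \<omega> \<in> Ei i (k-1) then W \<omega> * indicator {\<omega>. istar k \<omega> = i} \<omega> else 0) \<in> borel_measurable P.Phi"
    by (rule gen_E[OF Wk _ inv(1) C_step[OF i inv]]) (simp only: space_FB P.space_Phi)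
  show ?thesis
  proof (rule measurable_cong[THEN iffD1, OF _ g])
    fix \<omega> assume w: "\<omega> \<in> space P.Phi"
    then have "\<omega> \<in> space M" unfolding P.space_Phi .
    then show "(if \<omega> \<in> Ei i (k-1) then W \<omega> * indicator {\<omega>. istar k \<omega> = i} \<omega> else 0) = W \<omega> * indicator {\<omega>. istar k \<omega> = i} \<omega>"
      using istar_range[OF k] unfolding Ei_def by (auto simp: indicator_def)
  qed
qed

lemma key_batch:
  fixes W :: "'a \<Rightarrow> ennreal"
  assumes k: "k \<in> {1..n}" and W: "W \<in> borel_measurable (FB (k-1))"
  shows "(\<integral>\<^sup>+\<omega>. W \<omega> * indicator {\<omega>. h (p (istar k \<omega>) \<omega>) = 1} \<omega> \<partial>M)
       \<le> (\<integral>\<^sup>+\<omega>. W \<omega> * indicator {\<omega>. h (p (istar k \<omega>) \<omega>) = -1} \<omega> \<partial>M)"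
proof -
  have subk: "sets (FB (k-1)) \<subseteq> sets M" by (rule FB_sub) (use k in auto)
  have WM[measurable]: "W \<in> borel_measurable M"
    by (rule meas_trans[OF _ subk W]) (simp only: space_FB)
  have imM[measurable]: "istar k \<in> measurable M (count_space UNIV)"
    by (rule meas_trans[OF _ subk istar_meas[OF k]]) (simp only: space_FB)
  have pmi[measurable]: "\<And>i. i \<in> {1..n} \<Longrightarrow> p i \<in> borel_measurable M" by (rule pm)
  define T where "T c i \<omega> = W \<omega> * indicator {\<omega>. istar k \<omega> = i} \<omega> * indicator {\<omega>. (p i \<omega> < 1/2) = c} \<omega>" for c i \<omega>
  have Tm: "\<And>c i. i \<in> {1..n} \<Longrightarrow> T c i \<in> borel_measurable M" unfolding T_def by measurable
  have split: "W \<omega> * indicator {\<omega>. h (p (istar k \<omega>) \<omega>) = (if c then 1 else -1)} \<omega> = (\<Sum>i\<in>{1..n}. T c i \<omega>)"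
    if w: "\<omega> \<in> space M" for \<omega> c
  proof -
    have r: "istar k \<omega> \<in> {1..n}" using istar_range[OF k w] by auto
    have "(\<Sum>i\<in>{1..n}. T c i \<omega>) = (\<Sum>i\<in>{1..n}. if istar k \<omega> = i then W \<omega> * indicator {\<omega>. (p i \<omega> < 1/2) = c} \<omega> else 0)"
      unfolding T_def by (intro sum.cong) (auto simp: indicator_def)
    also have "\<dots> = W \<omega> * indicator {\<omega>. (p (istar k \<omega>) \<omega> < 1/2) = c} \<omega>"
      using r by (simp add: sum.delta' indicator_def)
    also have "\<dots> = W \<omega> * indicator {\<omega>. h (p (istar k \<omega>) \<omega>) = (if c then 1 else -1)} \<omega>"
      by (cases c) (auto simp: indicator_def h_def)
    finally show ?thesis by simp
  qed
  have "(\<integral>\<^sup>+\<omega>. W \<omega> * indicator {\<omega>. h (p (istar k \<omega>) \<omega>) = 1} \<omega> \<partial>M) = (\<integral>\<^sup>+\<omega>. (\<Sum>i\<in>{1..n}. T True i \<omega>) \<partial>M)"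
    using split[of _ True] by (intro nn_integral_cong) simp
  also have "\<dots> = (\<Sum>i\<in>{1..n}. \<integral>\<^sup>+\<omega>. T True i \<omega> \<partial>M)"
    by (rule nn_integral_sum) (use Tm in auto)
  also have "\<dots> \<le> (\<Sum>i\<in>{1..n}. \<integral>\<^sup>+\<omega>. T False i \<omega> \<partial>M)"
  proof (rule sum_mono)
    fix i assume i: "i \<in> {1..n}"
    interpret P: pv_setting M X "{1..n}" x p i by (rule pvs[OF i])
    have "(\<integral>\<^sup>+\<omega>. (W \<omega> * indicator {\<omega>. istar k \<omega> = i} \<omega>) * indicator {\<omega>. p i \<omega> < 1/2} \<omega> \<partial>M)
        \<le> (\<integral>\<^sup>+\<omega>. (W \<omega> * indicator {\<omega>. istar k \<omega> = i} \<omega>) * indicator {\<omega>. \<not> p i \<omega> < 1/2} \<omega> \<partial>M)"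
      by (rule P.key_fun[OF W_Phi[OF i k W]])
    moreover have "\<And>\<omega>. T True i \<omega> = (W \<omega> * indicator {\<omega>. istar k \<omega> = i} \<omega>) * indicator {\<omega>. p i \<omega> < 1/2} \<omega>"
      "\<And>\<omega>. T False i \<omega> = (W \<omega> * indicator {\<omega>. istar k \<omega> = i} \<omega>) * indicator {\<omega>. \<not> p i \<omega> < 1/2} \<omega>"
      unfolding T_def by (auto simp: indicator_def)
    ultimately show "(\<integral>\<^sup>+\<omega>. T True i \<omega> \<partial>M) \<le> (\<integral>\<^sup>+\<omega>. T False i \<omega> \<partial>M)" by simp
  qed
  also have "\<dots> = (\<integral>\<^sup>+\<omega>. (\<Sum>i\<in>{1..n}. T False i \<omega>) \<partial>M)"
    by (rule nn_integral_sum[symmetric]) (use Tm in auto)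
  also have "\<dots> = (\<integral>\<^sup>+\<omega>. W \<omega> * indicator {\<omega>. h (p (istar k \<omega>) \<omega>) = -1} \<omega> \<partial>M)"
    using split[of _ False] by (intro nn_integral_cong) simp
  finally show ?thesis .
qed

lemma istar_inj: "k \<le> n \<Longrightarrow> \<omega> \<in> space M \<Longrightarrow> inj_on (\<lambda>j. istar j \<omega>) {1..k}"
proof (rule inj_onI)
  fix j1 j2 assume k: "k \<le> n" and w: "\<omega> \<in> space M" and j: "j1 \<in> {1..k}" "j2 \<in> {1..k}" and e: "istar j1 \<omega> = istar j2 \<omega>"
  have *: "istar b \<omega> \<noteq> istar a \<omega>" if "a \<in> {1..k}" "b \<in> {1..k}" "a < b" for a b
  proof -
    have "istar b \<omega> \<notin> Mk (b-1) \<omega>" using istar_range[of b \<omega>] that k w by auto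
    moreover have "istar a \<omega> \<in> Mk (b-1) \<omega>" unfolding revealed_def using that by auto
    ultimately show ?thesis by auto
  qed
  show "j1 = j2"
  proof (rule ccontr)
    assume "j1 \<noteq> j2"
    then consider "j1 < j2" | "j2 < j1" by linarith
    then show False using * j e by cases (metis, metis)
  qed
qed

lemma batch_ok:
  assumes a: "0 < \<alpha>" "\<alpha> < 1" and u: "(\<exists>m>0. u = u_lin m \<alpha>) \<or> u = u_curved \<alpha>"
  shows "measure M {\<omega> \<in> space M. batch_reject u n p istar \<omega>} \<le> \<alpha>"
proof -
  define \<xi> where "\<xi> j \<omega> = (if j \<le> n then h (p (istar j \<omega>) \<omega>) else 0)" for j \<omega>
  define F where "F k = FB (min k n)" for k
  have subF: "subalgebra M (F k)" for k
    unfolding subalgebra_def F_def using FB_sub[of "min k n"] by (simp add: space_FB)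
  have meas: "\<xi> j \<in> borel_measurable (F k)" if j: "1 \<le> j" "j \<le> k" for j k
  proof (cases "j \<le> n")
    case False then show ?thesis unfolding \<xi>_def by simp
  next
    case True
    define L where "L = min k n"
    have jL: "j \<le> L" "L \<le> n" using j True unfolding L_def by auto
    define f where "f i \<omega> = (if i \<in> {1..n} then h (if i \<in> Mk L \<omega> then p i \<omega> else 0) else 0)" for i \<omega>
    have fm: "(\<lambda>\<omega>. f i \<omega>) \<in> borel_measurable (FB L)" for i
    proof (cases "i \<in> {1..n}")
      case True
      have "(\<lambda>\<omega>. h (if i \<in> Mk L \<omega> then p i \<omega> else 0)) \<in> borel_measurable (FB L)"
        using q_meas[OF True, of L] by measurable
      then show ?thesis unfolding f_def using True by simp
    next
      case False
      then have "(\<lambda>\<omega>. f i \<omega>) = (\<lambda>\<omega>. 0)" unfolding f_def by auto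
      then show ?thesis by simp
    qed
    have im: "istar j \<in> measurable (FB L) (count_space UNIV)" using istar_FB[OF jL] j by auto
    have "(\<lambda>\<omega>. f (istar j \<omega>) \<omega>) \<in> borel_measurable (FB L)"
      by (rule measurable_compose_countable[OF fm im])
    moreover have "f (istar j \<omega>) \<omega> = \<xi> j \<omega>" if w: "\<omega> \<in> space (FB L)" for \<omega>
    proof -
      have w': "\<omega> \<in> space M" using w by (simp add: space_FB)
      have r: "istar j \<omega> \<in> {1..n}" using istar_range[of j \<omega>] w' j True by auto
      have "istar j \<omega> \<in> Mk L \<omega>" unfolding revealed_def using j jL by auto
      then show ?thesis unfolding f_def \<xi>_def using r True by simp
    qed
    ultimately show ?thesis unfolding F_def L_def[symmetric]
      by (rule measurable_cong[THEN iffD1, rotated]) simp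
  qed
  have vals: "\<xi> j \<omega> \<in> {-1, 0, 1}" for j \<omega> unfolding \<xi>_def h_def by auto
  have key: "(\<integral>\<^sup>+\<omega>. W \<omega> * indicator {\<omega>. \<xi> k \<omega> = 1} \<omega> \<partial>M) \<le> (\<integral>\<^sup>+\<omega>. W \<omega> * indicator {\<omega>. \<xi> k \<omega> = -1} \<omega> \<partial>M)"
    if k: "1 \<le> k" and W: "W \<in> borel_measurable (F (k-1))" for k and W :: "'a \<Rightarrow> ennreal"
  proof (cases "k \<le> n")
    case False then show ?thesis unfolding \<xi>_def by simp
  next
    case True
    have "min (k-1) n = k-1" using True by simp
    then have "F (k-1) = FB (k-1)" unfolding F_def by (simp only:)
    then have "W \<in> borel_measurable (FB (k-1))" using W by simp
    from key_batch[OF _ this] k True show ?thesis unfolding \<xi>_def by simp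
  qed
  interpret VV: ville M F \<xi>
    by unfold_locales (use subF meas vals key in auto)
  have "{\<omega> \<in> space M. batch_reject u n p istar \<omega>} = {\<omega>\<in>space M. \<exists>k\<in>{1..n}. 1 \<le> VV.Cn k \<omega> \<and> VV.S k \<omega> > u (VV.Cn k \<omega>)}"
  proof -
    have eq: "VV.Cn k \<omega> = k \<and> VV.S k \<omega> = (\<Sum>i\<in>revealed istar k \<omega>. h (p i \<omega>))"
      if k: "k \<in> {1..n}" and w: "\<omega> \<in> space M" for k \<omega>
    proof
      have "{j\<in>{1..k}. \<xi> j \<omega> \<noteq> 0} = {1..k}" using k unfolding \<xi>_def by (auto simp: h_def)
      then show "VV.Cn k \<omega> = k" unfolding VV.Cn_def by simp
      have "VV.S k \<omega> = (\<Sum>j\<in>{1..k}. h (p (istar j \<omega>) \<omega>))"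
        unfolding VV.S_def \<xi>_def using k by (intro sum.cong) auto
      also have "\<dots> = (\<Sum>i\<in>revealed istar k \<omega>. h (p i \<omega>))"
        unfolding revealed_def using istar_inj[of k \<omega>] k w by (subst sum.reindex) auto
      finally show "VV.S k \<omega> = (\<Sum>i\<in>revealed istar k \<omega>. h (p i \<omega>))" .
    qed
    have "batch_reject u n p istar \<omega> \<longleftrightarrow> (\<exists>k\<in>{1..n}. 1 \<le> VV.Cn k \<omega> \<and> VV.S k \<omega> > u (VV.Cn k \<omega>))"
      if w: "\<omega> \<in> space M" for \<omega>
      unfolding batch_reject_def
    proof (rule bex_cong[OF refl])
      fix k assume k: "k \<in> {1..n}"
      show "(\<Sum>i\<in>revealed istar k \<omega>. h (p i \<omega>)) > u k \<longleftrightarrow> (1 \<le> VV.Cn k \<omega> \<and> VV.S k \<omega> > u (VV.Cn k \<omega>))"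
        using eq[OF k w] k by auto
    qed
    then show ?thesis by auto
  qed
  then show ?thesis using VV.bound_u[OF a u, of n] by simp
qed

end

theorem theorem8:
  fixes M :: "'a measure" and X :: "'x measure" and \<alpha> :: real and u :: "nat \<Rightarrow> real"
  assumes "prob_space M"
    and "0 < \<alpha>" and "\<alpha> < 1"
    and "(\<exists>m>0. u = u_lin m \<alpha>) \<or> u = u_curved \<alpha>"
  shows "(\<forall>n x p istar. pvalue_hyps M X {1..n} x p \<and> batch_strategy M X n x p istar \<longrightarrow>
            measure M {\<omega> \<in> space M. batch_reject u n p istar \<omega>} \<le> \<alpha>)
       \<and> (\<forall>x p d. pvalue_hyps M X {1..} x p \<and> online_strategy M X x p d \<longrightarrow>
            measure M {\<omega> \<in> space M. online_reject u p d \<omega>} \<le> \<alpha>)"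
proof (intro conjI allI impI)
  fix n x p istar
  assume H: "pvalue_hyps M X {1..n} x p \<and> batch_strategy M X n x p istar"
  interpret BS: batch_setting M X n x p istar
    using assms(1) H unfolding batch_setting_def batch_setting_axioms_def by auto
  show "measure M {\<omega> \<in> space M. batch_reject u n p istar \<omega>} \<le> \<alpha>"
    by (rule BS.batch_ok[OF assms(2,3,4)])
next
  fix x p d
  assume H: "pvalue_hyps M X {1..} x p \<and> online_strategy M X x p d"
  show "measure M {\<omega> \<in> space M. online_reject u p d \<omega>} \<le> \<alpha>"
    using H by (intro online_ok[OF assms(1,2,3,4)]) auto
qed

end
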